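(* Let $\mathbb{F}_q$ be a finite field of characteristic $p$. For every $u\in\mathbb{F}_q$ with $u^3\ne27$, $$\#\mathcal{I}_{\mathrm{H},u}=\begin{cases}1,& q\equiv0,2\pmod3,\\ 4,& q\equiv1\pmod3,\ p\ne2,\ A_u=0,\\ 6,& q\equiv1\pmod3,\ p\ne2,\ B_u=0,\\ 12,& q\equiv1\pmod3 \text{ and } A_uB_u\ne0.\end{cases}$$
   Context: For $u\in\mathbb{F}_q$ with $u^3\ne27$, the Hessian curve $E_{\mathrm{H},u}$ is the elliptic curve $X^3+Y^3+1=uXY$. Two such curves are $\mathbb{F}_q$-isomorphic if they are birationally equivalent over $\mathbb{F}_q$ (equivalently, their Weierstrass models are isomorphic via a Weierstrass change of variables with coefficients in $\mathbb{F}_q$). Define $\mathcal{I}_{\mathrm{H},u}=\{v\in\mathbb{F}_q: v^3\ne27,\ E_{\mathrm{H},u}\cong_{\mathbb{F}_q}E_{\mathrm{H},v}\}$. For $p\ne3$ put $A_u=-u(u^3+216)/3$ and $B_u=(u^6-540u^3-5832)/27$. *)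

theory Defs
  imports Main
begin

text \<open>Weierstrass equations y^2 + a1 x y + a3 y = x^3 + a2 x^2 + a4 x + a6,
  represented by their coefficient tuple (a1, a2, a3, a4, a6).\<close>

type_synonym 'a weier = "'a \<times> 'a \<times> 'a \<times> 'a \<times> 'a"

text \<open>Two Weierstrass equations are isomorphic over the base field if they are related by
  an admissible change of variables x = w^2 x' + r, y = w^3 y' + s w^2 x' + t with
  r, s, t, w in the field and w nonzero (Silverman, Table 3.1): here E' = (b1,...,b6) is the
  transform of E = (a1,...,a6).\<close>

definition weier_iso :: "'a::field weier \<Rightarrow> 'a weier \<Rightarrow> bool" where
  "weier_iso E E' \<longleftrightarrow>
     (case E of (a1, a2, a3, a4, a6) \<Rightarrow> case E' of (b1, b2, b3, b4, b6) \<Rightarrow>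
       (\<exists>r s t w. w \<noteq> 0 \<and>
          w * b1 = a1 + 2 * s \<and>
          w ^ 2 * b2 = a2 - s * a1 + 3 * r - s ^ 2 \<and>
          w ^ 3 * b3 = a3 + r * a1 + 2 * t \<and>
          w ^ 4 * b4 = a4 - s * a3 + 2 * r * a2 - (t + r * s) * a1 + 3 * r ^ 2 - 2 * s * t \<and>
          w ^ 6 * b6 = a6 + r * a4 + r ^ 2 * a2 + r ^ 3 - t * a3 - t ^ 2 - r * t * a1))"

text \<open>A Weierstrass model of the Hessian curve X^3 + Y^3 + 1 = u X Y (u^3 \<noteq> 27), obtained
  from it by a projective linear change of coordinates defined over the base field, sending the
  flex (1:-1:0) to the point at infinity.\<close>

definition hessian_weier :: "'a::field \<Rightarrow> 'a weier" where
  "hessian_weier u =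
     (if CHAR('a) = 3 then (u, 0, u ^ 2, 0, 0)
      else (3 * u, - 9 * u ^ 2, - 9 * (u ^ 3 - 27), 27 * u * (u ^ 3 - 27), - 27 * (u ^ 3 - 27) ^ 2))"

definition hessian_iso :: "'a::field \<Rightarrow> 'a \<Rightarrow> bool" where
  "hessian_iso u v \<longleftrightarrow> weier_iso (hessian_weier u) (hessian_weier v)"

definition I_H :: "'a::field \<Rightarrow> 'a set" where
  "I_H u = {v. v ^ 3 \<noteq> 27 \<and> hessian_iso u v}"

definition A_coef :: "'a::field \<Rightarrow> 'a" where
  "A_coef u = - u * (u ^ 3 + 216) / 3"

definition B_coef :: "'a::field \<Rightarrow> 'a" where
  "B_coef u = (u ^ 6 - 540 * u ^ 3 - 5832) / 27"

end

theory Submission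
  imports Defs
begin

lemma char3_iff: "CHAR('a::field) = 3 \<longleftrightarrow> (3::'a) = 0"
proof
  assume "CHAR('a) = 3"
  then show "(3::'a) = 0" by (metis of_nat_CHAR of_nat_numeral)
next
  assume h: "(3::'a) = 0"
  have "CHAR('a) dvd 3" using h of_nat_eq_0_iff_char_dvd[of 3] by (metis of_nat_numeral)
  moreover have "CHAR('a) \<noteq> 1"
    by (metis of_nat_1 of_nat_CHAR one_neq_zero)
  moreover have "CHAR('a) \<le> 3" using calculation(1) by (rule dvd_imp_le) simp
  moreover have "CHAR('a) = 0 \<or> CHAR('a) = 1 \<or> CHAR('a) = 2 \<or> CHAR('a) = 3" using calculation(3) by presburger
  ultimately show "CHAR('a) = 3" by auto
qed

lemma char2_iff: "CHAR('a::field) = 2 \<longleftrightarrow> (2::'a) = 0"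
proof
  assume "CHAR('a) = 2"
  then show "(2::'a) = 0" by (metis of_nat_CHAR of_nat_numeral)
next
  assume h: "(2::'a) = 0"
  have "CHAR('a) dvd 2" using h of_nat_eq_0_iff_char_dvd[of 2] by (metis of_nat_numeral)
  moreover have "CHAR('a) \<noteq> 1"
    by (metis of_nat_1 of_nat_CHAR one_neq_zero)
  moreover have "CHAR('a) \<le> 2" using calculation(1) by (rule dvd_imp_le) simp
  moreover have "CHAR('a) = 0 \<or> CHAR('a) = 1 \<or> CHAR('a) = 2" using calculation(3) by presburger
  ultimately show "CHAR('a) = 2" by auto
qed

lemma three_dvd_card:
  assumes "finite S" "\<And>x. x \<in> S \<Longrightarrow> f x \<in> S" "\<And>x. x \<in> S \<Longrightarrow> f (f (f x)) = x"
    "\<And>x. x \<in> S \<Longrightarrow> f x \<noteq> x"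
  shows "3 dvd card S"
  using assms
proof (induction "card S" arbitrary: S rule: less_induct)
  case less
  show ?case
  proof (cases "S = {}")
    case True then show ?thesis by simp
  next
    case False
    then obtain x where x: "x \<in> S" by blast
    define T where "T = S - {x, f x, f (f x)}"
    have d1: "f x \<noteq> x" using less x by blast
    have d2: "f (f x) \<noteq> f x" using less x by blast
    have d3: "f (f x) \<noteq> x"
    proof
      assume "f (f x) = x"
      then have "f (f (f x)) = f x" by simp
      then show False using less x d1 by simp
    qed
    have sub: "{x, f x, f (f x)} \<subseteq> S" using less x by auto
    have cT: "card T = card S - 3"
      unfolding T_def using sub d1 d2 d3 less(2) by (simp add: card_Diff_subset)
    have cS: "card S \<ge> 3"
    proof -
      have "card {x, f x, f (f x)} = 3" using d1 d2 d3 by auto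
      then show ?thesis using card_mono[OF less(2) sub] by simp
    qed
    have "3 dvd card T"
    proof (rule less(1))
      show "card T < card S" using cT cS by simp
      show "finite T" unfolding T_def using less(2) by simp
      fix y assume y: "y \<in> T"
      then have yS: "y \<in> S" unfolding T_def by simp
      show "f (f (f y)) = y" using less yS by blast
      show "f y \<noteq> y" using less yS by blast
      show "f y \<in> T"
      proof -
        have "f y \<in> S" using less yS by blast
        moreover have "f y \<noteq> x"
        proof
          assume "f y = x"
          then have "f (f (f y)) = f (f x)" by simp
          then show False using less yS y unfolding T_def by simp
        qed
        moreover have "f y \<noteq> f x"
        proof
          assume "f y = f x"
          then have "f (f (f y)) = f (f (f x))" by simp
          then show False using less yS y x unfolding T_def by simp
        qed
        moreover have "f y \<noteq> f (f x)"
        proof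
          assume "f y = f (f x)"
          then have "f (f (f y)) = f (f (f (f x)))" by simp
          then have "y = f x" using less yS x by simp
          then show False using y unfolding T_def by simp
        qed
        ultimately show ?thesis unfolding T_def by simp
      qed
    qed
    then show ?thesis using cT cS by (metis dvd_add_triv_right_iff le_add_diff_inverse2 numeral_3_eq_3
      dvd_refl)
  qed
qed

lemma q_char3:
  assumes "(3::'a::{finite,field}) = 0"
  shows "card (UNIV::'a set) mod 3 = 0"
proof -
  have "3 dvd card (UNIV::'a set)"
  proof (rule three_dvd_card[where f="\<lambda>x. x + 1"])
    fix x :: 'a
    have "x + 1 + 1 + 1 = x + 3" by simp
    then show "x + 1 + 1 + 1 = x" using assms by simp
    show "x + 1 \<noteq> x" by simp
  qed auto
  then show ?thesis by simp
qed

lemma q_omega: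
  assumes "(3::'a::{finite,field}) \<noteq> 0" "\<omega>^2 + \<omega> + 1 = (0::'a)"
  shows "card (UNIV::'a set) mod 3 = 1"
proof -
  have w1: "\<omega> \<noteq> 1" using assms by auto
  have w3: "\<omega>^3 = 1"
  proof -
    have "\<omega>^3 - 1 = (\<omega> - 1) * (\<omega>^2 + \<omega> + 1)" by algebra
    then show ?thesis using assms by simp
  qed
  have w0: "\<omega> \<noteq> 0" using assms by auto
  have "3 dvd card (UNIV - {0::'a})"
  proof (rule three_dvd_card[where f="\<lambda>x. \<omega> * x"])
    fix x :: 'a assume x: "x \<in> UNIV - {0}"
    show "\<omega> * x \<in> UNIV - {0}" using x w0 by simp
    have "\<omega> * (\<omega> * (\<omega> * x)) = \<omega>^3 * x" by algebra
    then show "\<omega> * (\<omega> * (\<omega> * x)) = x" using w3 by simp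
    show "\<omega> * x \<noteq> x" using x w1 by simp
  qed auto
  moreover have "card (UNIV - {0::'a}) = card (UNIV::'a set) - 1" by (simp add: card_Diff_singleton)
  moreover have "card (UNIV::'a set) \<ge> 1" by (simp add: Suc_leI finite_UNIV_card_ge_0)
  ultimately show ?thesis by presburger
qed

lemma q_noomega:
  assumes "(3::'a::{finite,field}) \<noteq> 0" "\<And>\<omega>. \<omega>^2 + \<omega> + 1 \<noteq> (0::'a)"
  shows "card (UNIV::'a set) mod 3 = 2"
proof -
  let ?f = "\<lambda>x::'a. 1 / (1 - x)"
  have "3 dvd card (UNIV - {0::'a, 1})"
  proof (rule three_dvd_card[where f="?f"])
    fix x :: 'a assume x: "x \<in> UNIV - {0, 1}"
    then have x0: "x \<noteq> 0" and x1: "x \<noteq> 1" by auto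
    have n1: "1 - x \<noteq> 0" using x1 by simp
    show "?f x \<in> UNIV - {0, 1}" using n1 x0 by (auto simp: field_simps)
    have "1 - 1 / (1 - x) = - x / (1 - x)" using n1 by (simp add: field_simps)
    then have "?f (?f x) = (x - 1) / x" using n1 x0 by (simp add: field_simps)
    moreover have "1 - (x - 1) / x = 1 / x" using x0 by (simp add: field_simps)
    ultimately show "?f (?f (?f x)) = x" using x0 by simp
    show "?f x \<noteq> x"
    proof
      assume "?f x = x"
      then have "x * (1 - x) = 1" using n1 by (simp add: field_simps)
      then have "(-x)^2 + (-x) + 1 = 0" by algebra
      then show False using assms(2) by blast
    qed
  qed auto
  moreover have "card (UNIV - {0::'a, 1}) = card (UNIV::'a set) - 2" by (simp add: card_Diff_subset)
  moreover have "card (UNIV::'a set) \<ge> 2"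
  proof -
    have "card {0::'a,1} \<le> card (UNIV::'a set)" by (rule card_mono) auto
    then show ?thesis by simp
  qed
  ultimately show ?thesis by presburger
qed

definition c4f :: "'a::field \<Rightarrow> 'a \<Rightarrow> 'a \<Rightarrow> 'a \<Rightarrow> 'a \<Rightarrow> 'a" where
  "c4f a1 a2 a3 a4 a6 = (a1^2+4*a2)^2 - 24*(a1*a3+2*a4)"
definition c6f :: "'a::field \<Rightarrow> 'a \<Rightarrow> 'a \<Rightarrow> 'a \<Rightarrow> 'a \<Rightarrow> 'a" where
  "c6f a1 a2 a3 a4 a6 = - ((a1^2+4*a2)^3) + 36*(a1^2+4*a2)*(a1*a3+2*a4) - 216*(a3^2+4*a6)"
definition dlf :: "'a::field \<Rightarrow> 'a \<Rightarrow> 'a \<Rightarrow> 'a \<Rightarrow> 'a \<Rightarrow> 'a" where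
  "dlf a1 a2 a3 a4 a6 = (let b2 = a1^2+4*a2; b4 = a1*a3+2*a4; b6 = a3^2+4*a6;
     b8 = a1^2*a6+4*a2*a6-a1*a3*a4+a2*a3^2-a4^2 in - (b2^2*b8)-8*b4^3-27*b6^2+9*b2*b4*b6)"

definition DD :: "'a::field \<Rightarrow> 'a \<Rightarrow> 'a \<Rightarrow> 'a \<Rightarrow> 'a" where
  "DD b2 b4 b6 b8 = - (b2^2*b8)-8*b4^3-27*b6^2+9*b2*b4*b6"

lemma DD_shift:
  fixes b2 b4 b6 b8 r :: "'a::field"
  assumes "4*b8 = b2*b6 - b4^2"
  shows "DD (b2+12*r) (b4 + r*b2 + 6*r^2) (b6 + 2*r*b4 + r^2*b2 + 4*r^3)
     (b8 + 3*r*b6 + 3*r^2*b4 + r^3*b2 + 3*r^4) = DD b2 b4 b6 b8"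
  unfolding DD_def using assms by algebra

lemma iso_inv:
  fixes a1 a2 a3 a4 a6 b1 b2 b3 b4 b6 r s t w :: "'a::field"
  assumes e1: "w * b1 = a1 + 2 * s"
    and e2: "w ^ 2 * b2 = a2 - s * a1 + 3 * r - s ^ 2"
    and e3: "w ^ 3 * b3 = a3 + r * a1 + 2 * t"
    and e4: "w ^ 4 * b4 = a4 - s * a3 + 2 * r * a2 - (t + r * s) * a1 + 3 * r ^ 2 - 2 * s * t"
    and e6: "w ^ 6 * b6 = a6 + r * a4 + r ^ 2 * a2 + r ^ 3 - t * a3 - t ^ 2 - r * t * a1"
  shows "w^4 * c4f b1 b2 b3 b4 b6 = c4f a1 a2 a3 a4 a6"
    "w^6 * c6f b1 b2 b3 b4 b6 = c6f a1 a2 a3 a4 a6"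
    "w^12 * dlf b1 b2 b3 b4 b6 = dlf a1 a2 a3 a4 a6"
proof -
  define B2 where "B2 = a1^2+4*a2"
  define B4 where "B4 = a1*a3+2*a4"
  define B6 where "B6 = a3^2+4*a6"
  define B8 where "B8 = a1^2*a6+4*a2*a6-a1*a3*a4+a2*a3^2-a4^2"
  have f2: "w^2*(b1^2+4*b2) = B2 + 12*r" unfolding B2_def using e1 e2 by algebra
  have f4: "w^4*(b1*b3+2*b4) = B4 + r*B2 + 6*r^2" unfolding B2_def B4_def using e1 e2 e3 e4 by algebra
  have f6: "w^6*(b3^2+4*b6) = B6 + 2*r*B4 + r^2*B2 + 4*r^3" unfolding B2_def B4_def B6_def
    using e1 e2 e3 e4 e6 by algebra
  have f8: "w^8*(b1^2*b6+4*b2*b6-b1*b3*b4+b2*b3^2-b4^2) = B8 + 3*r*B6 + 3*r^2*B4 + r^3*B2 + 3*r^4"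
    unfolding B2_def B4_def B6_def B8_def using e1 e2 e3 e4 e6 by algebra
  show "w^4 * c4f b1 b2 b3 b4 b6 = c4f a1 a2 a3 a4 a6"
    unfolding c4f_def using f2 f4 unfolding B2_def B4_def by algebra
  show "w^6 * c6f b1 b2 b3 b4 b6 = c6f a1 a2 a3 a4 a6"
    unfolding c6f_def using f2 f4 f6 unfolding B2_def B4_def B6_def by algebra
  have g: "w^12 * dlf b1 b2 b3 b4 b6 = DD (w^2*(b1^2+4*b2)) (w^4*(b1*b3+2*b4)) (w^6*(b3^2+4*b6))
     (w^8*(b1^2*b6+4*b2*b6-b1*b3*b4+b2*b3^2-b4^2))"
    unfolding dlf_def DD_def Let_def by algebra
  have rel: "4*B8 = B2*B6 - B4^2" unfolding B2_def B4_def B6_def B8_def by algebra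
  have h: "dlf a1 a2 a3 a4 a6 = DD B2 B4 B6 B8" unfolding dlf_def DD_def Let_def B2_def B4_def B6_def B8_def
    by simp
  show "w^12 * dlf b1 b2 b3 b4 b6 = dlf a1 a2 a3 a4 a6"
    unfolding g f2 f4 f6 f8 h using DD_shift[OF rel] by simp
qed

definition Pf :: "'a::field \<Rightarrow> 'a" where "Pf x = x*(x^3+216)"
definition Df :: "'a::field \<Rightarrow> 'a" where "Df x = x^3 - 27"
definition Cf :: "'a::field \<Rightarrow> 'a" where "Cf x = x^6 - 540*x^3 - 5832"
definition FF :: "'a::field \<Rightarrow> 'a \<Rightarrow> 'a" where "FF u v = Pf u^3 * Df v^3 - Pf v^3 * Df u^3"

lemma weier_iso_unf:
  "weier_iso (a1, a2, a3, a4, a6) (b1, b2, b3, b4, b6) \<longleftrightarrow>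
       (\<exists>r s t w. w \<noteq> 0 \<and>
          w * b1 = a1 + 2 * s \<and>
          w ^ 2 * b2 = a2 - s * a1 + 3 * r - s ^ 2 \<and>
          w ^ 3 * b3 = a3 + r * a1 + 2 * t \<and>
          w ^ 4 * b4 = a4 - s * a3 + 2 * r * a2 - (t + r * s) * a1 + 3 * r ^ 2 - 2 * s * t \<and>
          w ^ 6 * b6 = a6 + r * a4 + r ^ 2 * a2 + r ^ 3 - t * a3 - t ^ 2 - r * t * a1)"
  by (simp add: weier_iso_def)

lemma hw_not3:
  assumes "(3::'a::field) \<noteq> 0"
  shows "hessian_weier (u::'a) = (3 * u, - 9 * u ^ 2, - 9 * (u ^ 3 - 27), 27 * u * (u ^ 3 - 27), - 27 * (u ^ 3 - 27) ^ 2)"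
  using assms char3_iff[where 'a='a] unfolding hessian_weier_def by auto

lemma hw_3:
  assumes "(3::'a::field) = 0"
  shows "hessian_weier (u::'a) = (u, 0, u ^ 2, 0, 0)"
  using assms char3_iff[where 'a='a] unfolding hessian_weier_def by auto

lemma hess_inv:
  fixes u v :: "'a::field"
  assumes n3: "(3::'a) \<noteq> 0" and iso: "hessian_iso u v"
  shows "\<exists>w. w \<noteq> 0 \<and> w^4 * Pf v = Pf u \<and> w^6 * Cf v = Cf u \<and> w^12 * Df v^3 = Df u^3"
proof -
  from iso obtain r s t w where w: "w \<noteq> 0" and
    e: "w * (3*v) = 3*u + 2 * s"
       "w ^ 2 * (- 9 * v ^ 2) = (- 9 * u ^ 2) - s * (3*u) + 3 * r - s ^ 2"
       "w ^ 3 * (- 9 * (v ^ 3 - 27)) = (- 9 * (u ^ 3 - 27)) + r * (3*u) + 2 * t"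
       "w ^ 4 * (27 * v * (v ^ 3 - 27)) = (27 * u * (u ^ 3 - 27)) - s * (- 9 * (u ^ 3 - 27)) + 2 * r * (- 9 * u ^ 2) - (t + r * s) * (3*u) + 3 * r ^ 2 - 2 * s * t"
       "w ^ 6 * (- 27 * (v ^ 3 - 27) ^ 2) = (- 27 * (u ^ 3 - 27) ^ 2) + r * (27 * u * (u ^ 3 - 27)) + r ^ 2 * (- 9 * u ^ 2) + r ^ 3 - t * (- 9 * (u ^ 3 - 27)) - t ^ 2 - r * t * (3*u)"
    unfolding hessian_iso_def hw_not3[OF n3] weier_iso_unf by blast
  note I = iso_inv[OF e]
  have c4: "\<And>x::'a. c4f (3 * x) (- 9 * x ^ 2) (- 9 * (x ^ 3 - 27)) (27 * x * (x ^ 3 - 27)) (- 27 * (x ^ 3 - 27) ^ 2) = 81 * Pf x"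
    unfolding c4f_def Pf_def by algebra
  have c6: "\<And>x::'a. c6f (3 * x) (- 9 * x ^ 2) (- 9 * (x ^ 3 - 27)) (27 * x * (x ^ 3 - 27)) (- 27 * (x ^ 3 - 27) ^ 2) = -729 * Cf x"
    unfolding c6f_def Cf_def by algebra
  have dl: "\<And>x::'a. dlf (3 * x) (- 9 * x ^ 2) (- 9 * (x ^ 3 - 27)) (27 * x * (x ^ 3 - 27)) (- 27 * (x ^ 3 - 27) ^ 2) = 531441 * Df x^3"
    unfolding dlf_def Df_def Let_def by algebra
  have n81: "(81::'a) \<noteq> 0" and n729: "(729::'a) \<noteq> 0" and n531441: "(531441::'a) \<noteq> 0"
  proof -
    have "(3::'a)^4 \<noteq> 0" "(3::'a)^6 \<noteq> 0" "(3::'a)^12 \<noteq> 0" by (rule power_not_zero[OF n3])+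
    then show "(81::'a) \<noteq> 0" "(729::'a) \<noteq> 0" "(531441::'a) \<noteq> 0" by simp_all
  qed
  have "81 * (w^4 * Pf v - Pf u) = 0" using I(1) unfolding c4 by algebra
  then have "w^4 * Pf v = Pf u" using n81 by simp
  moreover have "-729 * (w^6 * Cf v - Cf u) = 0" using I(2) unfolding c6 by algebra
  then have "w^6 * Cf v = Cf u" using n729 by simp
  moreover have "531441 * (w^12 * Df v^3 - Df u^3) = 0" using I(3) unfolding dl by algebra
  then have "w^12 * Df v^3 = Df u^3" using n531441 by simp
  ultimately show ?thesis using w by blast
qed

lemma FF_zero:
  assumes n3: "(3::'a::field) \<noteq> 0" and iso: "hessian_iso u v"
  shows "FF u (v::'a) = 0"
proof -
  obtain w where w: "w^4 * Pf v = Pf u" "w^12 * Df v^3 = Df u^3" using hess_inv[OF assms] by blast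
  have "Pf u ^3 = (w^4 * Pf v)^3" using w(1) by simp
  also have "\<dots> = w^12 * Pf v^3" by algebra
  finally have "Pf u ^3 = w^12 * Pf v^3" .
  then show ?thesis unfolding FF_def using w(2) by algebra
qed

definition Hm :: "'a::field \<Rightarrow> 'a" where "Hm x = 3*(x+6)/(x-3)"

definition Orb :: "'a::field \<Rightarrow> 'a \<Rightarrow> 'a set" where
  "Orb \<omega> u = {z * x | z x. z \<in> {1, \<omega>, \<omega>^2} \<and> x \<in> {u, Hm u, Hm (\<omega>*u), Hm (\<omega>^2*u)}}"

lemma factF:
  fixes u v :: "'a::field"
  shows "FF u v = -(v-u)*(v*v+u*v+u*u)*(v*(u-3)-3*(u+6))
    * ((-3*(v+6))^2 - (-3*(v+6))*(u*(v-3)) + (u*(v-3))^2)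
    * ((u*v-3*v)^2 - (u*v-3*v)*(-3*u-18) + (-3*u-18)^2)
    * ((3*u-3*v)^2 - (3*u-3*v)*(u*v+3*u-18) + (u*v+3*u-18)^2)
    * ((-u*v-3*v-3*u)^2 - (-u*v-3*v-3*u)*(-u*v-18) + (-u*v-18)^2)"
  unfolding FF_def Pf_def Df_def by algebra

lemma cancelc: "(c::'a::field) \<noteq> 0 \<Longrightarrow> c * x = 0 \<Longrightarrow> x = 0" by simp

lemma norm_zero:
  fixes a b :: "'a::field"
  assumes "a^2 - a*b + b^2 = 0" "\<And>x::'a. x^2 + x + 1 \<noteq> 0"
  shows "a = 0 \<and> b = 0"
proof (cases "b = 0")
  case True then show ?thesis using assms(1) by simp
next
  case False
  have "(-a/b)^2 + (-a/b) + 1 = (a^2 - a*b + b^2)/b^2" using False by (simp add: field_simps power2_eq_square)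
  then have "(-a/b)^2 + (-a/b) + 1 = 0" using assms(1) by simp
  then show ?thesis using assms(2) by blast
qed

lemma FF_noomega:
  fixes u v :: "'a::field"
  assumes n3: "(3::'a) \<noteq> 0" and no: "\<And>x::'a. x^2 + x + 1 \<noteq> 0" and F: "FF u v = 0"
  shows "v = u \<or> v*(u-3) = 3*(u+6) \<or> (u*v = -18 \<and> u+v = 6)"
proof -
  have n9: "(9::'a) \<noteq> 0"
  proof -
    have "(3::'a)^2 \<noteq> 0" by (rule power_not_zero[OF n3])
    then show ?thesis by simp
  qed
  define p1 where "p1 = v - u"
  define p2 where "p2 = v*v+u*v+u*u"
  define p3 where "p3 = v*(u-3)-3*(u+6)"
  define p4 where "p4 = (-3*(v+6))^2 - (-3*(v+6))*(u*(v-3)) + (u*(v-3))^2"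
  define p5 where "p5 = (u*v-3*v)^2 - (u*v-3*v)*(-3*u-18) + (-3*u-18)^2"
  define p6 where "p6 = (3*u-3*v)^2 - (3*u-3*v)*(u*v+3*u-18) + (u*v+3*u-18)^2"
  define p7 where "p7 = (-u*v-3*v-3*u)^2 - (-u*v-3*v-3*u)*(-u*v-18) + (-u*v-18)^2"
  have "FF u v = - (p1*p2*p3*p4*p5*p6*p7)" unfolding factF p1_def p2_def p3_def p4_def p5_def p6_def p7_def
    by (simp only: minus_mult_left)
  then have "p1*p2*p3*p4*p5*p6*p7 = 0" using F by simp
  then have "(p1 = 0 \<or> p2 = 0 \<or> p3 = 0) \<or> (p4 = 0 \<or> p5 = 0 \<or> p6 = 0 \<or> p7 = 0)"
    by (simp only: mult_eq_0_iff disj_assoc)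
  then have "(v - u = 0 \<or> v*v+u*v+u*u = 0 \<or> v*(u-3)-3*(u+6) = 0) \<or>
    ((-3*(v+6))^2 - (-3*(v+6))*(u*(v-3)) + (u*(v-3))^2 = 0 \<or>
    (u*v-3*v)^2 - (u*v-3*v)*(-3*u-18) + (-3*u-18)^2 = 0 \<or>
    (3*u-3*v)^2 - (3*u-3*v)*(u*v+3*u-18) + (u*v+3*u-18)^2 = 0 \<or>
    (-u*v-3*v-3*u)^2 - (-u*v-3*v-3*u)*(-u*v-18) + (-u*v-18)^2 = 0)"
    unfolding p1_def p2_def p3_def p4_def p5_def p6_def p7_def .
  then show ?thesis
  proof (elim disjE)
    assume "v - u = 0" then show ?thesis by simp
  next
    assume "v*v+u*v+u*u = 0"
    then have "v^2 - v*(-u) + (-u)^2 = 0" by algebra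
    then have "v = 0 \<and> -u = 0" using norm_zero no by blast
    then show ?thesis by simp
  next
    assume "v*(u-3)-3*(u+6) = 0" then show ?thesis by simp
  next
    assume "(-3*(v+6))^2 - (-3*(v+6))*(u*(v-3)) + (u*(v-3))^2 = 0"
    then have h: "-3*(v+6) = 0 \<and> u*(v-3) = 0" using norm_zero no by blast
    then have "3*(v+6) = 0" by algebra
    then have "v+6 = 0" by (rule cancelc[OF n3])
    then have v6: "v = -6" by algebra
    have "v - 3 \<noteq> 0" using v6 n9 by simp
    then have "u = 0" using h by simp
    then show ?thesis using v6 by simp
  next
    assume "(u*v-3*v)^2 - (u*v-3*v)*(-3*u-18) + (-3*u-18)^2 = 0"
    then have h: "u*v-3*v = 0 \<and> -3*u-18 = 0" using norm_zero no by blast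
    then have "3*(u+6) = 0" by algebra
    then have "u+6 = 0" by (rule cancelc[OF n3])
    then have u6: "u = -6" by algebra
    have h1: "u*v-3*v = 0" using h by simp
    have "-9*v = 0" using h1 u6 by algebra
    then have "v = 0" using n9 by simp
    then show ?thesis using u6 by simp
  next
    assume "(3*u-3*v)^2 - (3*u-3*v)*(u*v+3*u-18) + (u*v+3*u-18)^2 = 0"
    then have "3*u-3*v = 0" using norm_zero no by blast
    then have "3*(u-v) = 0" by algebra
    then show ?thesis using n3 by simp
  next
    assume "(-u*v-3*v-3*u)^2 - (-u*v-3*v-3*u)*(-u*v-18) + (-u*v-18)^2 = 0"
    then have h: "-u*v-3*v-3*u = 0 \<and> -u*v-18 = 0" using norm_zero no by blast
    then have "3*(u+v-6) = 0" by algebra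
    then have "u+v-6 = 0" by (rule cancelc[OF n3])
    then have "u+v = 6" by algebra
    moreover have "u*v = -18" using h by algebra
    ultimately show ?thesis by simp
  qed
qed

lemma weier_iso_refl: "weier_iso E (E::'a::field weier)"
proof -
  obtain a1 a2 a3 a4 a6 where E: "E = (a1,a2,a3,a4,a6)" by (cases E) auto
  show ?thesis unfolding E weier_iso_unf
    by (rule exI[of _ 0], rule exI[of _ 0], rule exI[of _ 0], rule exI[of _ 1]) simp
qed

lemma weier_iso_trans:
  assumes "weier_iso E1 E2" "weier_iso E2 E3"
  shows "weier_iso E1 (E3::'a::field weier)"
proof -
  obtain a1 a2 a3 a4 a6 where E1: "E1 = (a1,a2,a3,a4,a6)" by (cases E1) auto
  obtain b1 b2 b3 b4 b6 where E2: "E2 = (b1,b2,b3,b4,b6)" by (cases E2) auto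
  obtain c1 c2 c3 c4 c6 where E3: "E3 = (c1,c2,c3,c4,c6)" by (cases E3) auto
  from assms(1) obtain r1 s1 t1 w1 where w1: "w1 \<noteq> 0" and
    e: "w1 * b1 = a1 + 2 * s1"
          "w1 ^ 2 * b2 = a2 - s1 * a1 + 3 * r1 - s1 ^ 2"
          "w1 ^ 3 * b3 = a3 + r1 * a1 + 2 * t1"
          "w1 ^ 4 * b4 = a4 - s1 * a3 + 2 * r1 * a2 - (t1 + r1 * s1) * a1 + 3 * r1 ^ 2 - 2 * s1 * t1"
          "w1 ^ 6 * b6 = a6 + r1 * a4 + r1 ^ 2 * a2 + r1 ^ 3 - t1 * a3 - t1 ^ 2 - r1 * t1 * a1"
    unfolding E1 E2 weier_iso_unf by blast
  from assms(2) obtain r2 s2 t2 w2 where w2: "w2 \<noteq> 0" and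
    f: "w2 * c1 = b1 + 2 * s2"
          "w2 ^ 2 * c2 = b2 - s2 * b1 + 3 * r2 - s2 ^ 2"
          "w2 ^ 3 * c3 = b3 + r2 * b1 + 2 * t2"
          "w2 ^ 4 * c4 = b4 - s2 * b3 + 2 * r2 * b2 - (t2 + r2 * s2) * b1 + 3 * r2 ^ 2 - 2 * s2 * t2"
          "w2 ^ 6 * c6 = b6 + r2 * b4 + r2 ^ 2 * b2 + r2 ^ 3 - t2 * b3 - t2 ^ 2 - r2 * t2 * b1"
    unfolding E2 E3 weier_iso_unf by blast
  let ?r = "r1 + w1^2 * r2" and ?s = "s1 + w1 * s2" and ?t = "t1 + w1^3 * t2 + s1 * w1^2 * r2"
    and ?w = "w1 * w2"
  have "?w \<noteq> 0" using w1 w2 by simp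
  moreover have "?w * c1 = a1 + 2 * ?s" using e f by algebra
  moreover have "?w ^ 2 * c2 = a2 - ?s * a1 + 3 * ?r - ?s ^ 2" using e f by algebra
  moreover have "?w ^ 3 * c3 = a3 + ?r * a1 + 2 * ?t" using e f by algebra
  moreover have "?w ^ 4 * c4 = a4 - ?s * a3 + 2 * ?r * a2 - (?t + ?r * ?s) * a1 + 3 * ?r ^ 2 - 2 * ?s * ?t"
    using e f by algebra
  moreover have "?w ^ 6 * c6 = a6 + ?r * a4 + ?r ^ 2 * a2 + ?r ^ 3 - ?t * a3 - ?t ^ 2 - ?r * ?t * a1"
    using e f by algebra
  ultimately show ?thesis unfolding E1 E3 weier_iso_unf by blast
qed

lemma iso_scale:
  fixes x z :: "'a::field"
  assumes n3: "(3::'a) \<noteq> 0" and z: "z^3 = (1::'a)"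
  shows "hessian_iso x (z * x)"
proof -
  have z0: "z^2 \<noteq> 0" using z by (metis one_neq_zero power_not_zero zero_power2 zero_power
    zero_less_numeral)
  have h1: "z\<^sup>2 * (3 * (z * x)) = 3 * x" using z by algebra
  have h2: "(z\<^sup>2) ^ 2 * (- 9 * (z * x)\<^sup>2) = - 9 * x\<^sup>2" using z by algebra
  have h3: "(z\<^sup>2) ^ 3 * (- 9 * ((z * x) ^ 3 - 27)) = - 9 * (x ^ 3 - 27)" using z by algebra
  have h4: "(z\<^sup>2) ^ 4 * (27 * (z * x) * ((z * x) ^ 3 - 27)) = 27 * x * (x ^ 3 - 27)" using z by algebra
  have h6: "(z\<^sup>2) ^ 6 * (- 27 * ((z * x) ^ 3 - 27)\<^sup>2) = - 27 * (x ^ 3 - 27)\<^sup>2" using z by algebra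
  show ?thesis unfolding hessian_iso_def hw_not3[OF n3] weier_iso_unf
    by (rule exI[of _ 0], rule exI[of _ 0], rule exI[of _ 0], rule exI[of _ "z^2"])
      (simp only: z0 h1 h2 h3 h4 h6, simp)
qed

lemma conv_div: "(c::'a::field) \<noteq> 0 \<Longrightarrow> W^k * B = c^k * R \<Longrightarrow> (W/c)^k * B = R"
  by (simp add: power_divide field_simps)

lemma iso_hmap:
  fixes x v \<omega> :: "'a::field"
  assumes n3: "(3::'a) \<noteq> 0" and om: "\<omega>^2 + \<omega> + 1 = (0::'a)" and x3: "x \<noteq> 3"
    and v: "v * (x - 3) = 3 * (x + 6)"
  shows "hessian_iso x v"
proof -
  have n9: "(9::'a) \<noteq> 0"
  proof -
    have "(3::'a)^2 \<noteq> 0" by (rule power_not_zero[OF n3])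
    then show ?thesis by simp
  qed
  define W where "W = (x - 3) * (1 + 2*\<omega>)"
  define s where "s = (\<omega> - 1) * x + 3 + 6*\<omega>"
  define r where "r = 3 * (x^2 + 3*x + 9)"
  define t where "t = 27 * \<omega> * (x^2 + 3*x + 9)"
  have e0: "(1 + 2*\<omega>)^2 = -3" using om by algebra
  have "1 + 2*\<omega> \<noteq> 0" using e0 n3 by auto
  then have w0: "W / 9 \<noteq> 0" unfolding W_def using x3 n9 by simp
  have "W^1 * (3 * v) = 9^1 * (3 * x + 2 * s)" unfolding W_def s_def using v om by algebra
  then have "(W/9)^1 * (3 * v) = 3 * x + 2 * s" by (rule conv_div[OF n9])
  moreover have "W ^ 2 * (- 9 * v ^ 2) = 9^2 * (- 9 * x ^ 2 - s * (3 * x) + 3 * r - s ^ 2)"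
    unfolding W_def s_def r_def using v om by algebra
  then have "(W/9) ^ 2 * (- 9 * v ^ 2) = - 9 * x ^ 2 - s * (3 * x) + 3 * r - s ^ 2" by (rule conv_div[OF n9])
  moreover have "W ^ 3 * (- 9 * (v ^ 3 - 27)) = 9^3 * (- 9 * (x ^ 3 - 27) + r * (3 * x) + 2 * t)"
    unfolding W_def r_def t_def using v om by algebra
  then have "(W/9) ^ 3 * (- 9 * (v ^ 3 - 27)) = - 9 * (x ^ 3 - 27) + r * (3 * x) + 2 * t" by (rule conv_div[OF n9])
  moreover have "W ^ 4 * (27 * v * (v ^ 3 - 27)) = 9^4 * (27 * x * (x ^ 3 - 27) - s * (- 9 * (x ^ 3 - 27)) + 2 * r * (- 9 * x ^ 2) - (t + r * s) * (3 * x) + 3 * r ^ 2 - 2 * s * t)"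
    unfolding W_def s_def r_def t_def using v om by algebra
  then have "(W/9) ^ 4 * (27 * v * (v ^ 3 - 27)) = 27 * x * (x ^ 3 - 27) - s * (- 9 * (x ^ 3 - 27)) + 2 * r * (- 9 * x ^ 2) - (t + r * s) * (3 * x) + 3 * r ^ 2 - 2 * s * t" by (rule conv_div[OF n9])
  moreover have "W ^ 6 * (- 27 * (v ^ 3 - 27) ^ 2) = 9^6 * (- 27 * (x ^ 3 - 27) ^ 2 + r * (27 * x * (x ^ 3 - 27)) + r ^ 2 * (- 9 * x ^ 2) + r ^ 3 - t * (- 9 * (x ^ 3 - 27)) - t ^ 2 - r * t * (3 * x))"
    unfolding W_def s_def r_def t_def using v om by algebra
  then have "(W/9) ^ 6 * (- 27 * (v ^ 3 - 27) ^ 2) = - 27 * (x ^ 3 - 27) ^ 2 + r * (27 * x * (x ^ 3 - 27)) + r ^ 2 * (- 9 * x ^ 2) + r ^ 3 - t * (- 9 * (x ^ 3 - 27)) - t ^ 2 - r * t * (3 * x)" by (rule conv_div[OF n9])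
  ultimately show ?thesis using w0 unfolding hessian_iso_def hw_not3[OF n3] weier_iso_unf by (metis power_one_right)
qed

lemma om3: "\<omega>^2 + \<omega> + 1 = (0::'a::field) \<Longrightarrow> \<omega>^3 = 1"
proof -
  assume h: "\<omega>^2 + \<omega> + 1 = 0"
  have "\<omega>^3 - 1 = (\<omega> - 1) * (\<omega>^2 + \<omega> + 1)" by algebra
  then show ?thesis using h by simp
qed

lemma lin_sol:
  fixes x v z :: "'a::field"
  assumes "x \<noteq> 3" "v*(x-3) - 3*z*(x+6) = 0"
  shows "v = z * Hm x"
proof -
  have "x - 3 \<noteq> 0" using assms(1) by simp
  then show ?thesis using assms(2) unfolding Hm_def by (simp add: field_simps)
qed

lemma cube_ne3:
  fixes x :: "'a::field"
  assumes "x^3 \<noteq> 27" shows "x \<noteq> 3"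
  using assms by auto

lemma FF_orbit:
  fixes u v \<omega> :: "'a::field"
  assumes n3: "(3::'a) \<noteq> 0" and om: "\<omega>^2 + \<omega> + 1 = 0" and u27: "u^3 \<noteq> 27" and F: "FF u v = 0"
  shows "v \<in> Orb \<omega> u"
proof -
  have w3: "\<omega>^3 = 1" using om3[OF om] .
  have x1: "(\<omega>*u)^3 = u^3" using w3 by algebra
  have x2: "(\<omega>^2*u)^3 = u^3" using w3 by algebra
  have u3: "u \<noteq> 3" using u27 by auto
  have wu3: "\<omega>*u \<noteq> 3" using u27 x1 by auto
  have w2u3: "\<omega>^2*u \<noteq> 3" using u27 x2 by auto
  define p1 where "p1 = v - u"
  define p2 where "p2 = v*v+u*v+u*u"
  define p3 where "p3 = v*(u-3)-3*(u+6)"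
  define p4 where "p4 = (-3*(v+6))^2 - (-3*(v+6))*(u*(v-3)) + (u*(v-3))^2"
  define p5 where "p5 = (u*v-3*v)^2 - (u*v-3*v)*(-3*u-18) + (-3*u-18)^2"
  define p6 where "p6 = (3*u-3*v)^2 - (3*u-3*v)*(u*v+3*u-18) + (u*v+3*u-18)^2"
  define p7 where "p7 = (-u*v-3*v-3*u)^2 - (-u*v-3*v-3*u)*(-u*v-18) + (-u*v-18)^2"
  have "FF u v = - (p1*p2*p3*p4*p5*p6*p7)" unfolding factF p1_def p2_def p3_def p4_def p5_def p6_def p7_def
    by (simp only: minus_mult_left)
  then have "p1*p2*p3*p4*p5*p6*p7 = 0" using F by simp
  then have "(p1 = 0 \<or> p2 = 0 \<or> p3 = 0) \<or> (p4 = 0 \<or> p5 = 0 \<or> p6 = 0 \<or> p7 = 0)"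
    by (simp only: mult_eq_0_iff disj_assoc)
  moreover have "p2 = (v - \<omega>*u) * (v - \<omega>^2*u)" unfolding p2_def using om by algebra
  moreover have "p4 = (v*(\<omega>*u-3) - 3*1*(\<omega>*u+6)) * (v*(\<omega>^2*u-3) - 3*1*(\<omega>^2*u+6))"
    unfolding p4_def using om by algebra
  moreover have "p5 = (v*(u-3) - 3*\<omega>*(u+6)) * (v*(u-3) - 3*\<omega>^2*(u+6))"
    unfolding p5_def using om by algebra
  moreover have "p6 = (v*(\<omega>*u-3) - 3*\<omega>*(\<omega>*u+6)) * (v*(\<omega>^2*u-3) - 3*\<omega>^2*(\<omega>^2*u+6))"
    unfolding p6_def using om by algebra
  moreover have "p7 = (v*(\<omega>^2*u-3) - 3*\<omega>*(\<omega>^2*u+6)) * (v*(\<omega>*u-3) - 3*\<omega>^2*(\<omega>*u+6))"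
    unfolding p7_def using om by algebra
  ultimately have "v - u = 0 \<or> v - \<omega>*u = 0 \<or> v - \<omega>^2*u = 0 \<or> v*(u-3)-3*(u+6) = 0 \<or>
     v*(\<omega>*u-3) - 3*1*(\<omega>*u+6) = 0 \<or> v*(\<omega>^2*u-3) - 3*1*(\<omega>^2*u+6) = 0 \<or>
     v*(u-3) - 3*\<omega>*(u+6) = 0 \<or> v*(u-3) - 3*\<omega>^2*(u+6) = 0 \<or>
     v*(\<omega>*u-3) - 3*\<omega>*(\<omega>*u+6) = 0 \<or> v*(\<omega>^2*u-3) - 3*\<omega>^2*(\<omega>^2*u+6) = 0 \<or>
     v*(\<omega>^2*u-3) - 3*\<omega>*(\<omega>^2*u+6) = 0 \<or> v*(\<omega>*u-3) - 3*\<omega>^2*(\<omega>*u+6) = 0"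
    unfolding p1_def p3_def by (simp only: mult_eq_0_iff disj_assoc)
  moreover have m: "\<And>z x. z \<in> {1, \<omega>, \<omega>^2} \<Longrightarrow> x \<in> {u, Hm u, Hm (\<omega>*u), Hm (\<omega>^2*u)} \<Longrightarrow> z * x \<in> Orb \<omega> u"
    unfolding Orb_def by blast
  have u1: "u = 1 * u" by simp
  have H1: "Hm u = Hm (1*u)" by simp
  have r3: "v*(u-3)-3*(u+6) = v*(u-3)-3*1*(u+6)" by simp
  ultimately show ?thesis
  proof (elim disjE)
    assume "v - u = 0" then have "v = 1 * u" by simp
    then show ?thesis using m[of "1" "u"] by simp
  next
    assume "v - \<omega>*u = 0" then have "v = \<omega> * u" by simp
    then show ?thesis using m[of "\<omega>" "u"] by simp
  next
    assume "v - \<omega>^2*u = 0" then have "v = \<omega>^2 * u" by simp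
    then show ?thesis using m[of "\<omega>^2" "u"] by simp
  next
    assume "v*(u-3)-3*(u+6) = 0"
    then have "v = 1 * Hm u" using lin_sol[OF u3, of v 1] r3 by simp
    then show ?thesis using m[of "1" "Hm u"] by simp
  next
    assume "v*(\<omega>*u-3) - 3*1*(\<omega>*u+6) = 0"
    then have "v = 1 * Hm (\<omega>*u)" by (rule lin_sol[OF wu3])
    then show ?thesis using m[of "1" "Hm (\<omega>*u)"] by simp
  next
    assume "v*(\<omega>^2*u-3) - 3*1*(\<omega>^2*u+6) = 0"
    then have "v = 1 * Hm (\<omega>^2*u)" by (rule lin_sol[OF w2u3])
    then show ?thesis using m[of "1" "Hm (\<omega>^2*u)"] by simp
  next
    assume "v*(u-3) - 3*\<omega>*(u+6) = 0"
    then have "v = \<omega> * Hm u" by (rule lin_sol[OF u3])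
    then show ?thesis using m[of "\<omega>" "Hm u"] by simp
  next
    assume "v*(u-3) - 3*\<omega>^2*(u+6) = 0"
    then have "v = \<omega>^2 * Hm u" by (rule lin_sol[OF u3])
    then show ?thesis using m[of "\<omega>^2" "Hm u"] by simp
  next
    assume "v*(\<omega>*u-3) - 3*\<omega>*(\<omega>*u+6) = 0"
    then have "v = \<omega> * Hm (\<omega>*u)" by (rule lin_sol[OF wu3])
    then show ?thesis using m[of "\<omega>" "Hm (\<omega>*u)"] by simp
  next
    assume "v*(\<omega>^2*u-3) - 3*\<omega>^2*(\<omega>^2*u+6) = 0"
    then have "v = \<omega>^2 * Hm (\<omega>^2*u)" by (rule lin_sol[OF w2u3])
    then show ?thesis using m[of "\<omega>^2" "Hm (\<omega>^2*u)"] by simp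
  next
    assume "v*(\<omega>^2*u-3) - 3*\<omega>*(\<omega>^2*u+6) = 0"
    then have "v = \<omega> * Hm (\<omega>^2*u)" by (rule lin_sol[OF w2u3])
    then show ?thesis using m[of "\<omega>" "Hm (\<omega>^2*u)"] by simp
  next
    assume "v*(\<omega>*u-3) - 3*\<omega>^2*(\<omega>*u+6) = 0"
    then have "v = \<omega>^2 * Hm (\<omega>*u)" by (rule lin_sol[OF wu3])
    then show ?thesis using m[of "\<omega>^2" "Hm (\<omega>*u)"] by simp
  qed
qed

lemma orbit_iso:
  fixes u v \<omega> :: "'a::field"
  assumes n3: "(3::'a) \<noteq> 0" and om: "\<omega>^2 + \<omega> + 1 = 0" and u27: "u^3 \<noteq> 27" and v: "v \<in> Orb \<omega> u"
  shows "hessian_iso u v"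
proof -
  have w3: "\<omega>^3 = 1" using om3[OF om] .
  have z3: "z^3 = 1" if "z \<in> {1, \<omega>, \<omega>^2}" for z
    using that w3 by (auto, algebra)
  have hx: "hessian_iso u (Hm (z*u))" if z: "z \<in> {1, \<omega>, \<omega>^2}" for z
  proof -
    have "(z*u)^3 = u^3" using z3[OF z] by algebra
    then have zu: "z*u \<noteq> 3" using u27 by auto
    have "hessian_iso u (z*u)" by (rule iso_scale[OF n3 z3[OF z]])
    moreover have "hessian_iso (z*u) (Hm (z*u))"
      by (rule iso_hmap[OF n3 om zu]) (use zu in \<open>simp add: Hm_def field_simps\<close>)
    ultimately show ?thesis unfolding hessian_iso_def by (rule weier_iso_trans)
  qed
  from v obtain z x where z: "z \<in> {1, \<omega>, \<omega>^2}" and x: "x \<in> {u, Hm u, Hm (\<omega>*u), Hm (\<omega>^2*u)}"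
    and vz: "v = z * x" unfolding Orb_def by blast
  have "hessian_iso u x"
  proof -
    have "x = u \<or> x = Hm (1*u) \<or> x = Hm (\<omega>*u) \<or> x = Hm (\<omega>^2*u)" using x by auto
    then show ?thesis using hx[of 1] hx[of \<omega>] hx[of "\<omega>^2"]
      unfolding hessian_iso_def using weier_iso_refl[of "hessian_weier u"] by auto
  qed
  moreover have "hessian_iso x (z * x)" by (rule iso_scale[OF n3 z3[OF z]])
  ultimately show ?thesis unfolding vz hessian_iso_def by (rule weier_iso_trans)
qed

lemma Hm_cube:
  fixes y :: "'a::field"
  assumes n3: "(3::'a) \<noteq> 0" and y: "y^3 \<noteq> 27"
  shows "(Hm y)^3 \<noteq> 27"
proof
  assume h: "(Hm y)^3 = 27"
  have y3: "y - 3 \<noteq> 0" using y by auto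
  have "(Hm y * (y-3))^3 = 27 * (y-3)^3" using h by (simp add: power_mult_distrib)
  moreover have "Hm y * (y-3) = 3*(y+6)" unfolding Hm_def using y3 by simp
  ultimately have "27*((y+6)^3 - (y-3)^3) = 0" by algebra
  moreover have n27: "(27::'a) \<noteq> 0"
  proof -
    have "(3::'a)^3 \<noteq> 0" by (rule power_not_zero[OF n3])
    then show ?thesis by simp
  qed
  ultimately have "(y+6)^3 - (y-3)^3 = 0" by (metis cancelc)
  then have "27*(y^2 + 3*y + 9) = 0" by algebra
  then have "y^2 + 3*y + 9 = 0" using n27 by (metis cancelc)
  then have "y^3 - 27 = 0" by algebra
  then show False using y by simp
qed

lemma orbit_valid:
  fixes u v \<omega> :: "'a::field"
  assumes n3: "(3::'a) \<noteq> 0" and om: "\<omega>^2 + \<omega> + 1 = 0" and u27: "u^3 \<noteq> 27" and v: "v \<in> Orb \<omega> u"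
  shows "v^3 \<noteq> 27"
proof -
  have w3: "\<omega>^3 = 1" using om3[OF om] .
  have z3: "z^3 = 1" if "z \<in> {1, \<omega>, \<omega>^2}" for z
    using that w3 by (auto, algebra)
  from v obtain z x where z: "z \<in> {1, \<omega>, \<omega>^2}" and x: "x \<in> {u, Hm u, Hm (\<omega>*u), Hm (\<omega>^2*u)}"
    and vz: "v = z * x" unfolding Orb_def by blast
  have c: "(z*y)^3 = y^3" if "z \<in> {1, \<omega>, \<omega>^2}" for z y using z3[OF that] by algebra
  have "x^3 \<noteq> 27"
    using x Hm_cube[OF n3 u27] Hm_cube[OF n3, of "\<omega>*u"] Hm_cube[OF n3, of "\<omega>^2*u"]
      c[of \<omega> u] c[of "\<omega>^2" u] u27 by auto
  then show ?thesis unfolding vz using c[OF z] by simp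
qed

lemma eqd: "(a::'a::field) = b \<Longrightarrow> a - b = 0" by simp

lemma nz2: "(2::'a::field) \<noteq> 0 \<Longrightarrow> (2::'a)^i \<noteq> 0" by simp
lemma nz23: "(2::'a::field) \<noteq> 0 \<Longrightarrow> (3::'a) \<noteq> 0 \<Longrightarrow> (2::'a)^i * 3^j \<noteq> 0" by simp

lemma aux1: "W*cv = (cu::'a::field) \<Longrightarrow> cv*x = k*cu \<Longrightarrow> cu*(x - k*W) = 0"
proof -
  assume a: "W*cv = cu" "cv*x = k*cu"
  have "cu*x = W*(cv*x)" using a(1) by (simp add: mult.assoc mult.commute mult.left_commute)
  also have "\<dots> = k*W*cu" using a(2) by (simp add: mult.commute mult.left_commute)
  finally show ?thesis by (simp add: algebra_simps)
qed

lemma cube_inj: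
  fixes a b :: "'a::field"
  assumes no: "\<And>x::'a. x^2 + x + 1 \<noteq> 0" and h: "a^3 = b^3"
  shows "a = b"
proof -
  have "(a - b) * (a^2 - a*(-b) + (-b)^2) = 0" using h by algebra
  then have "a - b = 0 \<or> a^2 - a*(-b) + (-b)^2 = 0" by simp
  then show ?thesis
  proof
    assume "a^2 - a*(-b) + (-b)^2 = 0"
    then have "a = 0 \<and> -b = 0" using norm_zero no by blast
    then show ?thesis by simp
  qed simp
qed

lemma sqrt_m3:
  fixes y :: "'a::field"
  assumes n2: "(2::'a) \<noteq> 0" and y: "y^2 = -3"
  shows "((y-1)/2)^2 + (y-1)/2 + 1 = 0"
proof -
  define z where "z = (y-1)/2"
  have yz: "y = 2*z + 1" unfolding z_def using n2 by (simp add: field_simps)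
  have "4*(z^2+z+1) = y^2 + 3" unfolding yz by algebra
  then have "4*(z^2+z+1) = 0" using y by simp
  moreover have "(4::'a) \<noteq> 0" using nz2[OF n2, of 2] by simp
  ultimately have "z^2+z+1 = 0" by (metis cancelc)
  then show ?thesis unfolding z_def .
qed

lemma nz_pow3: "(3::'a::field) \<noteq> 0 \<Longrightarrow> (3::'a)^n \<noteq> 0" by (rule power_not_zero)

lemma T1_odd:
  fixes u v :: "'a::field"
  assumes n3: "(3::'a) \<noteq> 0" and n2: "(2::'a) \<noteq> 0" and no: "\<And>x::'a. x^2 + x + 1 \<noteq> 0"
    and iso: "hessian_iso u v" and u27: "u^3 \<noteq> 27" and rel: "v*(u-3) = 3*(u+6)"
  shows "v = u"
proof -
  have u3: "u - 3 \<noteq> 0" using u27 by auto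
  obtain w where w0: "w \<noteq> 0" and wp: "w^4 * Pf v = Pf u" and wc: "w^6 * Cf v = Cf u"
    using hess_inv[OF n3 iso] by blast
  have idP: "Pf v * (u-3)^4 = 729 * Pf u" unfolding Pf_def using rel by algebra
  have idC: "Cf v * (u-3)^6 = -19683 * Cf u" unfolding Cf_def using rel by algebra
  have n729: "(729::'a) \<noteq> 0" using nz_pow3[OF n3, of 6] by simp
  have n19683: "(19683::'a) \<noteq> 0" using nz_pow3[OF n3, of 9] by simp
  have n27: "(27::'a) \<noteq> 0" using nz_pow3[OF n3, of 3] by simp
  show ?thesis
  proof (cases "Cf u = 0")
    case True
    have "Cf u = (u^2-6*u-18)*((u^2+18)^2 - (u^2+18)*(18-6*u) + (18-6*u)^2)" unfolding Cf_def by algebra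
    then have "u^2-6*u-18 = 0 \<or> (u^2+18)^2 - (u^2+18)*(18-6*u) + (18-6*u)^2 = 0" using True by simp
    then have "u^2-6*u-18 = 0"
    proof
      assume "(u^2+18)^2 - (u^2+18)*(18-6*u) + (18-6*u)^2 = 0"
      then have "18 - 6*u = 0" using norm_zero no by blast
      then have "6*(u-3) = 0" by algebra
      moreover have "(6::'a) \<noteq> 0" using nz23[OF n2 n3, of 1 1] by simp
      ultimately have "u - 3 = 0" by (metis cancelc)
      then show ?thesis using u3 by simp
    qed
    then have "(v - u) * (u - 3) = 0" using rel by algebra
    then show ?thesis using u3 by simp
  next
    case False
    have e6: "(u-3)^6 = -19683 * w^6"
    proof -
      have "Cf u * ((u-3)^6 - (-19683) * w^6) = 0" using aux1[OF wc idC] .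
      then have "(u-3)^6 - (-19683) * w^6 = 0" using False by (metis mult_eq_0_iff)
      then show ?thesis by algebra
    qed
    have sq: "(u-3)^2 = -27 * w^2"
    proof (cases "Pf u = 0")
      case False
      have "Pf u * ((u-3)^4 - 729 * w^4) = 0" using aux1[OF wp idP] .
      then have "(u-3)^4 - 729 * w^4 = 0" using False by (metis mult_eq_0_iff)
      then have e4: "(u-3)^4 = 729 * w^4" by algebra
      have "729 * w^4 * ((u-3)^2 + 27 * w^2) = 0" using e4 e6 by algebra
      moreover have "729 * w^4 \<noteq> 0" using n729 w0 by simp
      ultimately have "(u-3)^2 + 27 * w^2 = 0" by (metis mult_eq_0_iff)
      then show ?thesis by algebra
    next
      case True
      have "((u-3)^2)^3 = (-27 * w^2)^3" using e6 by algebra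
      then show ?thesis by (rule cube_inj[OF no])
    qed
    define y where "y = (u-3)/(3*w)"
    have "y * (3*w) = u - 3" unfolding y_def using w0 n3 by simp
    then have "(y^2 + 3) * (9*w^2) = 0" using sq[THEN eqd] by algebra
    moreover have "9*w^2 \<noteq> 0" using w0 nz_pow3[OF n3, of 2] by simp
    ultimately have "y^2 + 3 = 0" by (metis mult_eq_0_iff)
    then have "y^2 = -3" by algebra
    then have "((y-1)/2)^2 + (y-1)/2 + 1 = 0" by (rule sqrt_m3[OF n2])
    then show ?thesis using no by blast
  qed
qed

lemma T2_all:
  fixes u v :: "'a::field"
  assumes n3: "(3::'a) \<noteq> 0" and no: "\<And>x::'a. x^2 + x + 1 \<noteq> 0"
    and iso: "hessian_iso u v" and uv: "u*v = -18" and s: "u+v = 6"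
  shows "v = u"
proof (cases "(2::'a) = 0")
  case True
  have six: "(6::'a) = 3*2" by simp
  have "v - u = (u+v) - 2*u" by algebra
  also have "\<dots> = 0" using s True six by simp
  finally show ?thesis by simp
next
  case n2: False
  have vd: "v = 6 - u" using s[THEN eqd] by algebra
  have q: "u^2 - 6*u - 18 = 0" using uv[THEN eqd] vd[THEN eqd] by algebra
  have n54: "(54::'a) \<noteq> 0" using nz23[OF n2 n3, of 1 3] by simp
  have Pu: "Pf u \<noteq> 0"
  proof
    assume "Pf u = 0"
    then have "u = 0 \<or> u^3 + 216 = 0" unfolding Pf_def by simp
    then show False
    proof
      assume "u = 0" then have "(18::'a) = 0" using q by simp
      then have "(18::'a) * 3 = 0" by simp
      then have "(54::'a) = 0" by simp
      then show False using n54 by simp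
    next
      assume c: "u^3 + 216 = 0"
      have "54*(u+6) = (u^3+216) - (u+6)*(u^2-6*u-18)" by algebra
      then have "54*(u+6) = 0" using c q by simp
      then have "u + 6 = 0" using n54 by (metis cancelc)
      moreover have "(54::'a) = (u^2-6*u-18) - (u-12)*(u+6)" by algebra
      ultimately have "(54::'a) = 0" using q by simp
      then show False using n54 by simp
    qed
  qed
  obtain w where w0: "w \<noteq> 0" and wp: "w^4 * Pf v = Pf u"
    using hess_inv[OF n3 iso] by blast
  have Pv: "Pf v \<noteq> 0" using wp Pu by auto
  have id: "27 * Pf u + (2*u+3)^2 * Pf v = 0" unfolding Pf_def using vd[THEN eqd] q by algebra
  have "Pf v * (27 * w^4 + (2*u+3)^2) = 0" using id[THEN eqd] wp[THEN eqd] by algebra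
  then have "27 * w^4 + (2*u+3)^2 = 0" using Pv by (metis mult_eq_0_iff)
  then have e: "27 * w^4 = - ((2*u+3)^2)" by algebra
  define y where "y = (2*u+3)/(3*w^2)"
  have "y * (3*w^2) = 2*u + 3" unfolding y_def using w0 n3 by simp
  then have "(y^2 + 3) * (9*w^4) = 0" using e[THEN eqd] by algebra
  moreover have "9*w^4 \<noteq> 0" using w0 nz_pow3[OF n3, of 2] by simp
  ultimately have "y^2 + 3 = 0" by (metis mult_eq_0_iff)
  then have "y^2 = -3" by algebra
  then have "((y-1)/2)^2 + (y-1)/2 + 1 = 0" by (rule sqrt_m3[OF n2])
  then show ?thesis using no by blast
qed

lemma ch2:
  fixes a b h k :: "'a::field"
  shows "(2::'a) = 0 \<Longrightarrow> a - b = h + 2*k \<Longrightarrow> h = 0 \<Longrightarrow> a = b" by simp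

lemma T1_even:
  fixes u v :: "'a::field"
  assumes c2: "(2::'a) = 0" and no: "\<And>x::'a. x^2 + x + 1 \<noteq> 0"
    and iso: "hessian_iso u v" and u27: "u^3 \<noteq> 27" and rel: "v*(u-3) = 3*(u+6)"
  shows "v = u"
proof -
  have n3: "(3::'a) \<noteq> 0"
  proof
    assume "(3::'a) = 0"
    then have "(3::'a) - 2 = 0" using c2 by simp
    then show False by simp
  qed
  have rel2: "v*(u+1) = u"
    proof -
      have id: "v*(u+1) - (u) = v*(u-3) - 3*(u+6) + 2*(2*v+u+9)" by algebra
      have hz: "v*(u-3) - 3*(u+6) = 0" by (simp only: rel[THEN eqd], (simp)?)
      show ?thesis using ch2[OF c2 id hz] .
    qed
  show ?thesis
  proof (cases "u = 0")
    case True
    then show ?thesis using rel2 by simp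
  next
    case u0: False
    from iso obtain r s t w where w0: "w \<noteq> 0" and
      e1: "w * (3*v) = 3*u + 2 * s" and
      e2: "w ^ 2 * (- 9 * v ^ 2) = (- 9 * u ^ 2) - s * (3*u) + 3 * r - s ^ 2" and
      e3: "w ^ 3 * (- 9 * (v ^ 3 - 27)) = (- 9 * (u ^ 3 - 27)) + r * (3*u) + 2 * t"
      unfolding hessian_iso_def hw_not3[OF n3] weier_iso_unf by blast
    have f1: "w*v = u"
    proof -
      have id: "w*v - (u) = w * (3*v) - (3*u + 2 * s) + 2*(s - w*v + u)" by algebra
      have hz: "w * (3*v) - (3*u + 2 * s) = 0" by (simp only: e1[THEN eqd], (simp)?)
      show ?thesis using ch2[OF c2 id hz] .
    qed
    have v0: "v \<noteq> 0" using f1 u0 by auto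
    have "(w - (u+1)) * v = 0" using f1[THEN eqd] rel2[THEN eqd] by algebra
    then have wu: "w = u + 1" using v0 by simp
    have f2: "r = s*u + s^2"
    proof -
      have id: "r - (s*u + s^2) = -(w ^ 2 * (- 9 * v ^ 2) - ((- 9 * u ^ 2) - s * (3*u) + 3 * r - s ^ 2)) - 9*(w*v-u)*(w*v+u) + 2*(-(r - s*u))" by algebra
      have hz: "-(w ^ 2 * (- 9 * v ^ 2) - ((- 9 * u ^ 2) - s * (3*u) + 3 * r - s ^ 2)) - 9*(w*v-u)*(w*v+u) = 0" by (simp only: e2[THEN eqd] f1[THEN eqd], (simp)?)
      show ?thesis using ch2[OF c2 id hz] .
    qed
    have f3: "w^3 = 1 + r*u"
    proof -
      have id: "w^3 - (1 + r*u) = (w ^ 3 * (- 9 * (v ^ 3 - 27)) - ((- 9 * (u ^ 3 - 27)) + r * (3*u) + 2 * t)) + 9*(w*v-u)*(w^2*v^2+w*v*u+u^2) + 2*(-121*w^3 + 121 + r*u + t)" by algebra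
      have hz: "(w ^ 3 * (- 9 * (v ^ 3 - 27)) - ((- 9 * (u ^ 3 - 27)) + r * (3*u) + 2 * t)) + 9*(w*v-u)*(w^2*v^2+w*v*u+u^2) = 0" by (simp only: e3[THEN eqd] f1[THEN eqd], (simp)?)
      show ?thesis using ch2[OF c2 id hz] .
    qed
    have X0: "(u+1)^3 - 1 - (s*u + s^2)*u = 0" using f3 unfolding wu f2 by simp
    have "u * (s^2 + s*u + u^2 + u + 1) = 0"
    proof -
      have id: "u * (s^2 + s*u + u^2 + u + 1) - 0 = -((u+1)^3 - 1 - (s*u + s^2)*u) + 2*(u^3+2*u^2+2*u)" by algebra
      have hz: "-((u+1)^3 - 1 - (s*u + s^2)*u) = 0" by (simp only: X0, (simp)?)
      show ?thesis using ch2[OF c2 id hz] .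
    qed
    then have g: "s^2 + s*u + u^2 + u + 1 = 0" using u0 by simp
    have "((s+1)/u)^2 + (s+1)/u + 1 = ((s+1)^2 + (s+1)*u + u^2)/u^2"
      using u0 by (simp add: field_simps power2_eq_square)
    also have "(s+1)^2 + (s+1)*u + u^2 = (s^2 + s*u + u^2 + u + 1) + 2*s" by algebra
    finally have "((s+1)/u)^2 + (s+1)/u + 1 = 0" using g c2 by simp
    then show ?thesis using no by blast
  qed
qed

lemma ch3:
  fixes a b h k :: "'a::field"
  shows "(3::'a) = 0 \<Longrightarrow> a - b = h + 3*k \<Longrightarrow> h = 0 \<Longrightarrow> a = b" by simp

lemma char3_case:
  fixes u v :: "'a::field"
  assumes c3: "(3::'a) = 0" and iso: "hessian_iso u v" and u27: "u^3 \<noteq> 27"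
  shows "v = u"
proof -
  have "(27::'a) = 3 * 9" by simp
  then have "(27::'a) = 0" using c3 by simp
  then have u0: "u \<noteq> 0" using u27 by auto
  from iso obtain r s t w where w0: "w \<noteq> 0" and
      e1: "w * v = u + 2 * s" and
      e2: "w ^ 2 * 0 = 0 - s * u + 3 * r - s ^ 2" and
      e3: "w ^ 3 * v^2 = u^2 + r * u + 2 * t" and
      e4: "w ^ 4 * 0 = 0 - s * u^2 + 2 * r * 0 - (t + r * s) * u + 3 * r ^ 2 - 2 * s * t" and
      e6: "w ^ 6 * 0 = 0 + r * 0 + r ^ 2 * 0 + r ^ 3 - t * u^2 - t ^ 2 - r * t * u"
    unfolding hessian_iso_def hw_3[OF c3] weier_iso_unf by blast
  note E1 = e1[THEN eqd] and E2 = e2[THEN eqd] and E3 = e3[THEN eqd] and E4 = e4[THEN eqd]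
    and E6 = e6[THEN eqd]
  have "s * (u + s) - 0 = (w ^ 2 * 0 - (0 - s * u + 3 * r - s ^ 2)) + 3 * r" by algebra
  from ch3[OF c3 this E2] have "s * (u + s) = 0" .
  then have "s = 0 \<or> u + s = 0" by simp
  then show ?thesis
  proof
    assume s0: "s = 0"
    have g1: "w * v = u" using e1 s0 by simp
    have "t * u - 0 = ((w ^ 4 * 0 - (0 - s * u^2 + 2 * r * 0 - (t + r * s) * u + 3 * r ^ 2 - 2 * s * t)) - s*(u^2+r*u+2*t)) + 3*r^2"
      by algebra
    then have "t * u = 0" by (rule ch3[OF c3]) (simp only: E4, simp only: s0, (simp)?)
    then have t0: "t = 0" using u0 by simp
    have "r^3 - 0 = (-(w ^ 6 * 0 - (0 + r * 0 + r ^ 2 * 0 + r ^ 3 - t * u^2 - t ^ 2 - r * t * u)) + t*(u^2+t+r*u)) + 3*0"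
      by algebra
    then have "r^3 = 0" by (rule ch3[OF c3]) (simp only: E6, simp only: t0, (simp)?)
    then have r0: "r = 0" by simp
    have v0: "v \<noteq> 0" using g1 u0 by auto
    have h3: "w^3 * v^2 - u^2 = 0" using e3 r0 t0 by simp
    have "(w - 1) * (w^2 * v^2) - 0 = ((w^3*v^2 - u^2) - (w*v - u)*(w*v + u)) + 3*0" by algebra
    then have "(w - 1) * (w^2 * v^2) = 0" by (rule ch3[OF c3]) (simp only: h3 g1, (simp)?)
    then have "w = 1" using w0 v0 by simp
    then show ?thesis using g1 by simp
  next
    assume s1: "u + s = 0"
    have "w * v - (-u) = (w * v - (u + 2 * s)) + 2*(u+s)" by algebra
    then have g1: "w * v = -u" using E1 s1 by simp
    have v0: "v \<noteq> 0" using g1 u0 by auto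
    have "u * (u^2 + r*u + t) - 0 = (-(w ^ 4 * 0 - (0 - s * u^2 + 2 * r * 0 - (t + r * s) * u + 3 * r ^ 2 - 2 * s * t)) + (u+s)*(u^2+r*u+2*t)) + 3*(- (r^2))"
      by algebra
    then have "u * (u^2 + r*u + t) = 0" by (rule ch3[OF c3]) (simp only: E4, simp only: s1, (simp)?)
    then have g4: "u^2 + r*u + t = 0" using u0 by simp
    then have t1: "t = - (u^2) - r*u" by algebra
    have "u * (u*w + u + r) = (w ^ 3 * v^2 - (u^2 + r * u + 2 * t)) - w*(w*v+u)*(w*v-u) + 2*(u^2 + r*u + t)"
      by algebra
    also have "\<dots> = 0" using E3 g1 g4 by simp
    finally have "u * (u*w + u + r) = 0" .
    then have "u*w + u + r = 0" using u0 by simp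
    then have r1: "r = -u*(w+1)" by algebra
    have t2: "t = u^2 * w" using t1 unfolding r1 by algebra
    have "u^3 * (w+1)^3 = 0" using E6 unfolding r1 t2 by algebra
    then have "w + 1 = 0" using u0 by simp
    then have "w = -1" by algebra
    then show ?thesis using g1 by simp
  qed
qed

lemma LF1_0:
  fixes y \<omega> :: "'a::field"
  assumes om: "\<omega>^2 + \<omega> + 1 = 0"
  shows "1 * (Pf y * Cf y * Df y) = (y*(y-3) - 1*(3*(y+6))) * (((-1889568))*y + (629856)*y^2 + ((-314928))*y^3 + (26244)*y^4 + ((-26244))*y^5 + (10206)*y^6 + (1458)*y^7 + (81)*y^8 + (54)*y^9 + (6)*y^10 + (1)*y^11)"
  unfolding Pf_def Cf_def Df_def by algebra

lemma LF1_1: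
  fixes y \<omega> :: "'a::field"
  assumes om: "\<omega>^2 + \<omega> + 1 = 0"
  shows "1 * (Pf y * Cf y * Df y) = (y*(y-3) - \<omega>*(3*(y+6))) * ((1889568 + 1889568*\<omega>)*y + ((-314928))*y^2 + ((-157464)*\<omega>)*y^3 + (157464 + 157464*\<omega>)*y^4 + ((-34992))*y^5 + ((-14580)*\<omega>)*y^6 + ((-1944) + (-1944)*\<omega>)*y^7 + ((-486))*y^8 + (27*\<omega>)*y^9 + (3 + 3*\<omega>)*y^10 + (1)*y^11)"
  unfolding Pf_def Cf_def Df_def using om by algebra

lemma LF1_2:
  fixes y \<omega> :: "'a::field"
  assumes om: "\<omega>^2 + \<omega> + 1 = 0"
  shows "1 * (Pf y * Cf y * Df y) = (y*(y-3) - \<omega>^2*(3*(y+6))) * (((-1889568)*\<omega>)*y + ((-314928))*y^2 + (157464 + 157464*\<omega>)*y^3 + ((-157464)*\<omega>)*y^4 + ((-34992))*y^5 + (14580 + 14580*\<omega>)*y^6 + (1944*\<omega>)*y^7 + ((-486))*y^8 + ((-27) + (-27)*\<omega>)*y^9 + ((-3)*\<omega>)*y^10 + (1)*y^11)"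
  unfolding Pf_def Cf_def Df_def using om by algebra

lemma LF2_1_0:
  fixes y \<omega> :: "'a::field"
  assumes om: "\<omega>^2 + \<omega> + 1 = 0"
  shows "27 * (Pf y * Cf y * Df y) = ((y+6)*(\<omega>*y-3) - 1*((\<omega>*y+6)*(y-3))) * (((-68024448) + (-34012224)*\<omega>) + ((-4094064) + (-2047032)*\<omega>)*y^3 + (227448 + 113724*\<omega>)*y^6 + (702 + 351*\<omega>)*y^9 + ((-2) + (-1)*\<omega>)*y^12)"
  unfolding Pf_def Cf_def Df_def using om by algebra

lemma LF2_1_1:
  fixes y \<omega> :: "'a::field"
  assumes om: "\<omega>^2 + \<omega> + 1 = 0"
  shows "3 * (Pf y * Cf y * Df y) = ((y+6)*(\<omega>*y-3) - \<omega>*((\<omega>*y+6)*(y-3))) * (((-3779136) + (-1889568)*\<omega>)*y + (314928 + 629856*\<omega>)*y^2 + (157464 + (-157464)*\<omega>)*y^3 + ((-314928) + (-157464)*\<omega>)*y^4 + (34992 + 69984*\<omega>)*y^5 + (14580 + (-14580)*\<omega>)*y^6 + (3888 + 1944*\<omega>)*y^7 + (486 + 972*\<omega>)*y^8 + ((-27) + 27*\<omega>)*y^9 + ((-6) + (-3)*\<omega>)*y^10 + ((-1) + (-2)*\<omega>)*y^11)"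
  unfolding Pf_def Cf_def Df_def using om by algebra

lemma LF2_1_2:
  fixes y \<omega> :: "'a::field"
  assumes om: "\<omega>^2 + \<omega> + 1 = 0"
  shows "3 * (Pf y * Cf y * Df y) = ((y+6)*(\<omega>*y-3) - \<omega>^2*((\<omega>*y+6)*(y-3))) * (((-1889568) + 1889568*\<omega>)*y + ((-1259712) + (-629856)*\<omega>)*y^2 + ((-314928) + (-629856)*\<omega>)*y^3 + (26244 + (-26244)*\<omega>)*y^4 + (52488 + 26244*\<omega>)*y^5 + (10206 + 20412*\<omega>)*y^6 + (1458 + (-1458)*\<omega>)*y^7 + ((-162) + (-81)*\<omega>)*y^8 + (54 + 108*\<omega>)*y^9 + (6 + (-6)*\<omega>)*y^10 + ((-2) + (-1)*\<omega>)*y^11)"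
  unfolding Pf_def Cf_def Df_def using om by algebra

lemma LF2_2_0:
  fixes y \<omega> :: "'a::field"
  assumes om: "\<omega>^2 + \<omega> + 1 = 0"
  shows "27 * (Pf y * Cf y * Df y) = ((y+6)*(\<omega>^2*y-3) - 1*((\<omega>^2*y+6)*(y-3))) * (((-34012224) + 34012224*\<omega>) + ((-2047032) + 2047032*\<omega>)*y^3 + (113724 + (-113724)*\<omega>)*y^6 + (351 + (-351)*\<omega>)*y^9 + ((-1) + 1*\<omega>)*y^12)"
  unfolding Pf_def Cf_def Df_def using om by algebra

lemma LF2_2_1:
  fixes y \<omega> :: "'a::field"
  assumes om: "\<omega>^2 + \<omega> + 1 = 0"
  shows "3 * (Pf y * Cf y * Df y) = ((y+6)*(\<omega>^2*y-3) - \<omega>*((\<omega>^2*y+6)*(y-3))) * (((-3779136) + (-1889568)*\<omega>)*y + ((-629856) + 629856*\<omega>)*y^2 + (314928 + 629856*\<omega>)*y^3 + (52488 + 26244*\<omega>)*y^4 + (26244 + (-26244)*\<omega>)*y^5 + ((-10206) + (-20412)*\<omega>)*y^6 + (2916 + 1458*\<omega>)*y^7 + ((-81) + 81*\<omega>)*y^8 + ((-54) + (-108)*\<omega>)*y^9 + (12 + 6*\<omega>)*y^10 + ((-1) + 1*\<omega>)*y^11)"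
  unfolding Pf_def Cf_def Df_def using om by algebra

lemma LF2_2_2:
  fixes y \<omega> :: "'a::field"
  assumes om: "\<omega>^2 + \<omega> + 1 = 0"
  shows "3 * (Pf y * Cf y * Df y) = ((y+6)*(\<omega>^2*y-3) - \<omega>^2*((\<omega>^2*y+6)*(y-3))) * (((-1889568) + 1889568*\<omega>)*y + ((-314928) + (-629856)*\<omega>)*y^2 + (314928 + 157464*\<omega>)*y^3 + ((-157464) + 157464*\<omega>)*y^4 + ((-34992) + (-69984)*\<omega>)*y^5 + (29160 + 14580*\<omega>)*y^6 + (1944 + (-1944)*\<omega>)*y^7 + ((-486) + (-972)*\<omega>)*y^8 + ((-54) + (-27)*\<omega>)*y^9 + ((-3) + 3*\<omega>)*y^10 + (1 + 2*\<omega>)*y^11)"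
  unfolding Pf_def Cf_def Df_def using om by algebra

lemma om_facts:
  fixes \<omega> :: "'a::field"
  assumes n3: "(3::'a) \<noteq> 0" and om: "\<omega>^2 + \<omega> + 1 = 0"
  shows "\<omega>^3 = 1" "\<omega> \<noteq> 1" "\<omega>^2 \<noteq> 1" "\<omega> \<noteq> \<omega>^2" "\<omega> \<noteq> 0"
proof -
  show w3: "\<omega>^3 = 1" by (rule om3[OF om])
  show w1: "\<omega> \<noteq> 1" using om n3 by auto
  show w0: "\<omega> \<noteq> 0" using om by auto
  show "\<omega>^2 \<noteq> 1"
  proof
    assume "\<omega>^2 = 1"
    then have a: "\<omega>^2 - 1 = 0" by simp
    have "\<omega>^2 + \<omega> + 1 - (\<omega>^2 - 1) = \<omega> + 2" by algebra
    then have "\<omega> + 2 = 0" using a om by simp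
    then have "\<omega> = -2" by algebra
    then have "\<omega>^2 + \<omega> + 1 = 3" by simp
    then have "(3::'a) = 0" using om by simp
    then show False using n3 by simp
  qed
  show "\<omega> \<noteq> \<omega>^2"
  proof
    assume "\<omega> = \<omega>^2"
    then have "\<omega> * (\<omega> - 1) = 0" by algebra
    then show False using w0 w1 by simp
  qed
qed

lemma card_orb:
  fixes \<omega> :: "'a::field"
  assumes n3: "(3::'a) \<noteq> 0" and om: "\<omega>^2 + \<omega> + 1 = 0" and fin: "finite X"
    and nz: "\<And>x. x \<in> X \<Longrightarrow> x \<noteq> 0"
    and ci: "\<And>x y. x \<in> X \<Longrightarrow> y \<in> X \<Longrightarrow> x^3 = y^3 \<Longrightarrow> x = y"
  shows "card {z * x | z x. z \<in> {1, \<omega>, \<omega>^2} \<and> x \<in> X} = 3 * card X"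
proof -
  note f = om_facts[OF n3 om]
  have z3: "z^3 = 1" if "z \<in> {1, \<omega>, \<omega>^2}" for z
    using that f(1) by (auto, algebra)
  have eq: "{z * x | z x. z \<in> {1, \<omega>, \<omega>^2} \<and> x \<in> X} = (\<lambda>(z,x). z * x) ` ({1, \<omega>, \<omega>^2} \<times> X)"
    by auto
  have inj: "inj_on (\<lambda>(z,x). z * x) ({1, \<omega>, \<omega>^2} \<times> X)"
  proof (rule inj_onI, clarify)
    fix z x z' x'
    assume a: "z \<in> {1, \<omega>, \<omega>^2}" "x \<in> X" "z' \<in> {1, \<omega>, \<omega>^2}" "x' \<in> X" and e: "z * x = z' * x'"
    have "(z*x)^3 = (z'*x')^3" using e by simp
    then have "z^3 * x^3 = z'^3 * x'^3" by (simp add: power_mult_distrib)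
    then have "x^3 = x'^3" using z3[OF a(1)] z3[OF a(3)] by simp
    then have xx: "x = x'" using ci a by blast
    have "(z - z') * x' = 0" using e[unfolded xx, THEN eqd] by algebra
    then show "z = z' \<and> x = x'" using nz[OF a(4)] xx by simp
  qed
  have c3: "card {1, \<omega>, \<omega>^2} = 3" using f by auto
  show ?thesis unfolding eq card_image[OF inj] card_cartesian_product c3 ..
qed

lemma cubediff:
  fixes X Y \<omega> :: "'a::field"
  assumes om: "\<omega>^2 + \<omega> + 1 = 0"
  shows "X^3 - Y^3 = (X - 1*Y) * (X - \<omega>*Y) * (X - \<omega>^2*Y)"
  using om by algebra

lemma Hm_rel: "(y::'a::field) \<noteq> 3 \<Longrightarrow> Hm y * (y - 3) = 3*(y+6)"
  unfolding Hm_def by simp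

lemma PCD_nz:
  fixes y :: "'a::field"
  assumes "Pf y * Cf y * Df y \<noteq> 0" "(c::'a) \<noteq> 0" "c * (Pf y * Cf y * Df y) = Q * R"
  shows "Q \<noteq> 0"
  using assms by auto

lemma nz3p: "(3::'a::field) \<noteq> 0 \<Longrightarrow> (3::'a)^n \<noteq> 0" by simp

lemma L1:
  fixes y \<omega> :: "'a::field"
  assumes n3: "(3::'a) \<noteq> 0" and om: "\<omega>^2 + \<omega> + 1 = 0" and y3: "y \<noteq> 3"
    and nz: "Pf y * Cf y * Df y \<noteq> 0"
  shows "(Hm y)^3 \<noteq> y^3"
proof
  assume h: "(Hm y)^3 = y^3"
  have "(y*(y-3))^3 = (Hm y * (y-3))^3" using h by (simp add: power_mult_distrib)
  also have "\<dots> = (3*(y+6))^3" using Hm_rel[OF y3] by simp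
  finally have "(y*(y-3))^3 - (3*(y+6))^3 = 0" by simp
  then have "(y*(y-3) - 1*(3*(y+6))) * (y*(y-3) - \<omega>*(3*(y+6))) * (y*(y-3) - \<omega>^2*(3*(y+6))) = 0"
    unfolding cubediff[OF om] .
  moreover have "y*(y-3) - 1*(3*(y+6)) \<noteq> 0" by (rule PCD_nz[OF nz _ LF1_0[OF om]]) simp
  moreover have "y*(y-3) - \<omega>*(3*(y+6)) \<noteq> 0" by (rule PCD_nz[OF nz _ LF1_1[OF om]]) simp
  moreover have "y*(y-3) - \<omega>^2*(3*(y+6)) \<noteq> 0" by (rule PCD_nz[OF nz _ LF1_2[OF om]]) simp
  ultimately show False by simp
qed

lemma L2:
  fixes y \<omega> :: "'a::field"
  assumes n3: "(3::'a) \<noteq> 0" and om: "\<omega>^2 + \<omega> + 1 = 0" and y3: "y \<noteq> 3"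
    and nz: "Pf y * Cf y * Df y \<noteq> 0" and z: "z = \<omega> \<or> z = \<omega>^2" and zy3: "z * y \<noteq> 3"
  shows "(Hm y)^3 \<noteq> (Hm (z*y))^3"
proof
  assume h: "(Hm y)^3 = (Hm (z*y))^3"
  have "((y+6)*(z*y-3))^3 * 27 = (Hm y * (y-3))^3 * (z*y-3)^3" unfolding Hm_rel[OF y3] by algebra
  also have "\<dots> = (Hm (z*y) * (z*y-3))^3 * (y-3)^3" using h by (simp add: power_mult_distrib mult_ac)
  also have "\<dots> = ((z*y+6)*(y-3))^3 * 27" unfolding Hm_rel[OF zy3] by algebra
  finally have "(((y+6)*(z*y-3))^3 - ((z*y+6)*(y-3))^3) * 27 = 0" by algebra
  moreover have "(27::'a) \<noteq> 0" using nz3p[OF n3, of 3] by simp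
  ultimately have "((y+6)*(z*y-3))^3 - ((z*y+6)*(y-3))^3 = 0" by simp
  then have P: "((y+6)*(z*y-3) - 1*((z*y+6)*(y-3))) * ((y+6)*(z*y-3) - \<omega>*((z*y+6)*(y-3))) *
     ((y+6)*(z*y-3) - \<omega>^2*((z*y+6)*(y-3))) = 0"
    unfolding cubediff[OF om] .
  have n27: "(27::'a) \<noteq> 0" using nz3p[OF n3, of 3] by simp
  have n3': "(3::'a) \<noteq> 0" by fact
  from z show False
  proof
    assume zz: "z = \<omega>"
    have "(y+6)*(z*y-3) - 1*((z*y+6)*(y-3)) \<noteq> 0" unfolding zz by (rule PCD_nz[OF nz n27 LF2_1_0[OF om]])
    moreover have "(y+6)*(z*y-3) - \<omega>*((z*y+6)*(y-3)) \<noteq> 0" unfolding zz by (rule PCD_nz[OF nz n3' LF2_1_1[OF om]])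
    moreover have "(y+6)*(z*y-3) - \<omega>^2*((z*y+6)*(y-3)) \<noteq> 0" unfolding zz by (rule PCD_nz[OF nz n3' LF2_1_2[OF om]])
    ultimately show False using P by simp
  next
    assume zz: "z = \<omega>^2"
    have "(y+6)*(z*y-3) - 1*((z*y+6)*(y-3)) \<noteq> 0" unfolding zz by (rule PCD_nz[OF nz n27 LF2_2_0[OF om]])
    moreover have "(y+6)*(z*y-3) - \<omega>*((z*y+6)*(y-3)) \<noteq> 0" unfolding zz by (rule PCD_nz[OF nz n3' LF2_2_1[OF om]])
    moreover have "(y+6)*(z*y-3) - \<omega>^2*((z*y+6)*(y-3)) \<noteq> 0" unfolding zz by (rule PCD_nz[OF nz n3' LF2_2_2[OF om]])
    ultimately show False using P by simp
  qed
qed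

lemma refl_I: "(u::'a::field)^3 \<noteq> 27 \<Longrightarrow> u \<in> I_H u"
  unfolding I_H_def hessian_iso_def using weier_iso_refl[of "hessian_weier u"] by auto

lemma noomega_I:
  fixes u :: "'a::field"
  assumes n3: "(3::'a) \<noteq> 0" and no: "\<And>x::'a. x^2 + x + 1 \<noteq> 0" and u27: "u^3 \<noteq> 27"
  shows "I_H u = {u}"
proof
  show "{u} \<subseteq> I_H u" using refl_I[OF u27] by simp
  show "I_H u \<subseteq> {u}"
  proof
    fix v assume "v \<in> I_H u"
    then have iso: "hessian_iso u v" unfolding I_H_def by simp
    have "FF u v = 0" by (rule FF_zero[OF n3 iso])
    then have "v = u \<or> v*(u-3) = 3*(u+6) \<or> (u*v = -18 \<and> u+v = 6)" by (rule FF_noomega[OF n3 no])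
    then have "v = u"
    proof (elim disjE conjE)
      assume rel: "v*(u-3) = 3*(u+6)"
      show "v = u"
      proof (cases "(2::'a) = 0")
        case True show ?thesis by (rule T1_even[OF True no iso u27 rel])
      next
        case False show ?thesis by (rule T1_odd[OF n3 False no iso u27 rel])
      qed
    next
      assume "u*v = -18" "u+v = 6"
      then show "v = u" using T2_all[OF n3 no iso] by blast
    qed simp
    then show "v \<in> {u}" by simp
  qed
qed

lemma char3_I:
  fixes u :: "'a::field"
  assumes c3: "(3::'a) = 0" and u27: "u^3 \<noteq> 27"
  shows "I_H u = {u}"
proof
  show "{u} \<subseteq> I_H u" using refl_I[OF u27] by simp
  show "I_H u \<subseteq> {u}"
  proof
    fix v assume "v \<in> I_H u"
    then have iso: "hessian_iso u v" unfolding I_H_def by simp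
    show "v \<in> {u}" using char3_case[OF c3 iso u27] by simp
  qed
qed

lemma omega_I_Z:
  fixes u \<omega> :: "'a::field"
  assumes n3: "(3::'a) \<noteq> 0" and om: "\<omega>^2 + \<omega> + 1 = 0" and u27: "u^3 \<noteq> 27"
  shows "I_H u = {v. v^3 \<noteq> 27 \<and> FF u v = 0}"
proof
  show "I_H u \<subseteq> {v. v^3 \<noteq> 27 \<and> FF u v = 0}"
    unfolding I_H_def using FF_zero[OF n3] by auto
  show "{v. v^3 \<noteq> 27 \<and> FF u v = 0} \<subseteq> I_H u"
    unfolding I_H_def using FF_orbit[OF n3 om u27] orbit_iso[OF n3 om u27] by auto
qed

lemma omega_I_orb:
  fixes u \<omega> :: "'a::field"
  assumes n3: "(3::'a) \<noteq> 0" and om: "\<omega>^2 + \<omega> + 1 = 0" and u27: "u^3 \<noteq> 27"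
  shows "I_H u = Orb \<omega> u"
proof
  show "I_H u \<subseteq> Orb \<omega> u"
    unfolding I_H_def using FF_zero[OF n3] FF_orbit[OF n3 om u27] by auto
  show "Orb \<omega> u \<subseteq> I_H u"
    unfolding I_H_def using orbit_iso[OF n3 om u27] orbit_valid[OF n3 om u27] by auto
qed

lemma card12:
  fixes u \<omega> :: "'a::field"
  assumes n3: "(3::'a) \<noteq> 0" and om: "\<omega>^2 + \<omega> + 1 = 0" and u27: "u^3 \<noteq> 27"
    and P: "Pf u \<noteq> 0" and C: "Cf u \<noteq> 0"
  shows "card (I_H u) = 12"
proof -
  note f = om_facts[OF n3 om]
  have u0: "u \<noteq> 0" using P unfolding Pf_def by auto
  have u216: "u^3 + 216 \<noteq> 0" using P unfolding Pf_def by auto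
  have D: "Df u \<noteq> 0" using u27 unfolding Df_def by auto
  have cub: "y^3 = u^3 \<Longrightarrow> y \<noteq> 0 \<and> y \<noteq> 3 \<and> Pf y * Cf y * Df y \<noteq> 0" for y
  proof -
    assume yu: "y^3 = u^3"
    have "y \<noteq> 0" using yu u0 by auto
    moreover have "y \<noteq> 3" using yu u27 by auto
    moreover have "Pf y \<noteq> 0" using \<open>y \<noteq> 0\<close> u216 yu unfolding Pf_def by simp
    moreover have "Cf y = Cf u"
    proof -
      have "Cf y = (y^3)^2 - 540*y^3 - 5832" unfolding Cf_def by algebra
      also have "\<dots> = (u^3)^2 - 540*u^3 - 5832" using yu by simp
      also have "\<dots> = Cf u" unfolding Cf_def by algebra
      finally show ?thesis .
    qed
    moreover have "Df y = Df u" unfolding Df_def using yu by simp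
    ultimately show ?thesis using C D by simp
  qed
  have y1: "(\<omega>*u)^3 = u^3" using f(1) by algebra
  have y2: "(\<omega>^2*u)^3 = u^3" using f(1) by algebra
  have ww: "\<omega> * (\<omega> * u) = \<omega>^2 * u" by algebra
  obtain c0 c1 c2 where c0: "u \<noteq> 0 \<and> u \<noteq> 3 \<and> Pf u * Cf u * Df u \<noteq> 0"
     and c1: "\<omega>*u \<noteq> 0 \<and> \<omega>*u \<noteq> 3 \<and> Pf (\<omega>*u) * Cf (\<omega>*u) * Df (\<omega>*u) \<noteq> 0"
     and c2: "\<omega>^2*u \<noteq> 0 \<and> \<omega>^2*u \<noteq> 3 \<and> Pf (\<omega>^2*u) * Cf (\<omega>^2*u) * Df (\<omega>^2*u) \<noteq> 0"
    using cub[OF refl] cub[OF y1] cub[OF y2] by blast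
  have hnz: "Hm y \<noteq> 0" if "y^3 = u^3" for y
  proof
    assume "Hm y = 0"
    moreover have "y \<noteq> 3" using cub[OF that] by simp
    ultimately have "3*(y+6) = 0" using Hm_rel[of y] by simp
    then have "y + 6 = 0" by (rule cancelc[OF n3])
    then have "y = -6" by algebra
    then have "u^3 + 216 = 0" using that by simp
    then show False using u216 by simp
  qed
  have d1: "(Hm u)^3 \<noteq> u^3" using L1[OF n3 om _ ] c0 by blast
  have d2: "(Hm (\<omega>*u))^3 \<noteq> u^3" using L1[OF n3 om, of "\<omega>*u"] c1 y1 by simp
  have d3: "(Hm (\<omega>^2*u))^3 \<noteq> u^3" using L1[OF n3 om, of "\<omega>^2*u"] c2 y2 by simp
  have d4: "(Hm u)^3 \<noteq> (Hm (\<omega>*u))^3" using L2[OF n3 om, of u \<omega>] c0 c1 by simp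
  have d5: "(Hm u)^3 \<noteq> (Hm (\<omega>^2*u))^3" using L2[OF n3 om, of u "\<omega>^2"] c0 c2 by simp
  have d6: "(Hm (\<omega>*u))^3 \<noteq> (Hm (\<omega>^2*u))^3" using L2[OF n3 om, of "\<omega>*u" \<omega>] c1 c2 ww by simp
  define X where "X = {u, Hm u, Hm (\<omega>*u), Hm (\<omega>^2*u)}"
  have nzX: "\<And>x. x \<in> X \<Longrightarrow> x \<noteq> 0" unfolding X_def using u0 hnz[OF refl] hnz[OF y1] hnz[OF y2] by auto
  have ciX: "x = y" if x: "x \<in> X" and y: "y \<in> X" and xy: "x^3 = y^3" for x y
  proof -
    have dx: "x = u \<or> x = Hm u \<or> x = Hm (\<omega>*u) \<or> x = Hm (\<omega>^2*u)" using x unfolding X_def by simp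
    have dy: "y = u \<or> y = Hm u \<or> y = Hm (\<omega>*u) \<or> y = Hm (\<omega>^2*u)" using y unfolding X_def by simp
    note dd = d1 d2 d3 d4 d5 d6 d1[symmetric] d2[symmetric] d3[symmetric] d4[symmetric] d5[symmetric] d6[symmetric]
    from dx dy xy dd show ?thesis by (elim disjE) simp_all
  qed
  have cX: "card X = 4"
  proof -
    have "u \<noteq> Hm u" "u \<noteq> Hm (\<omega>*u)" "u \<noteq> Hm (\<omega>^2*u)" "Hm u \<noteq> Hm (\<omega>*u)" "Hm u \<noteq> Hm (\<omega>^2*u)"
      "Hm (\<omega>*u) \<noteq> Hm (\<omega>^2*u)" using d1 d2 d3 d4 d5 d6 by auto
    then show ?thesis unfolding X_def by simp
  qed
  have IH: "I_H u = {z * x | z x. z \<in> {1, \<omega>, \<omega>^2} \<and> x \<in> X}"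
    unfolding omega_I_orb[OF n3 om u27] Orb_def X_def ..
  have fX: "finite X" unfolding X_def by simp
  have ce: "card {z * x | z x. z \<in> {1, \<omega>, \<omega>^2} \<and> x \<in> X} = 3 * card X"
    by (rule card_orb[OF n3 om fX nzX ciX])
  have "card (I_H u) = 3 * card X" by (simp only: IH ce)
  then show ?thesis using cX by simp
qed

lemma card4:
  fixes u \<omega> :: "'a::field"
  assumes n3: "(3::'a) \<noteq> 0" and n2: "(2::'a) \<noteq> 0" and om: "\<omega>^2 + \<omega> + 1 = 0" and u27: "u^3 \<noteq> 27"
    and P: "Pf u = 0"
  shows "card (I_H u) = 4"
proof -
  note f = om_facts[OF n3 om]
  have D: "Df u \<noteq> 0" using u27 unfolding Df_def by auto
  have n6: "(6::'a) \<noteq> 0" using nz23[OF n2 n3, of 1 1] by simp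
  have fac: "Pf v = v * (v - (-6)) * (v - (-6*\<omega>)) * (v - (-6*\<omega>^2))" for v
    unfolding Pf_def using om by algebra
  have "I_H u = {v. Pf v = 0}"
  proof -
    have "FF u v = - (Pf v^3 * Df u^3)" for v unfolding FF_def using P by simp
    then have e: "FF u v = 0 \<longleftrightarrow> Pf v = 0" for v using D by simp
    have "Pf v = 0 \<Longrightarrow> v^3 \<noteq> 27" for v :: 'a
    proof
      assume a: "Pf v = 0" "v^3 = 27"
      then have "v * 243 = 0" unfolding Pf_def by simp
      moreover have "(243::'a) \<noteq> 0" using nz_pow3[OF n3, of 5] by simp
      ultimately have "v = 0" by simp
      then show False using a(2) n3 nz_pow3[OF n3, of 3] by simp
    qed
    then show ?thesis unfolding omega_I_Z[OF n3 om u27] using e by auto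
  qed
  also have "{v. Pf v = 0} = {0, -6, -6*\<omega>, -6*\<omega>^2}"
  proof -
    have "Pf v = 0 \<longleftrightarrow> v = 0 \<or> v = -6 \<or> v = -6*\<omega> \<or> v = -6*\<omega>^2" for v :: 'a
      unfolding fac by (simp only: mult_eq_0_iff right_minus_eq disj_assoc)
    then show ?thesis by auto
  qed
  finally have I: "I_H u = {0, -6, -6*\<omega>, -6*\<omega>^2}" .
  have "(0::'a) \<noteq> -6" "(0::'a) \<noteq> -6*\<omega>" "(0::'a) \<noteq> -6*\<omega>^2" using n6 f by auto
  moreover have "(-6::'a) \<noteq> -6*\<omega>" "(-6::'a) \<noteq> -6*\<omega>^2" "-6*\<omega> \<noteq> -6*\<omega>^2" using n6 f by auto
  ultimately show ?thesis unfolding I by simp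
qed

lemma card6:
  fixes u \<omega> :: "'a::field"
  assumes n3: "(3::'a) \<noteq> 0" and n2: "(2::'a) \<noteq> 0" and om: "\<omega>^2 + \<omega> + 1 = 0" and u27: "u^3 \<noteq> 27"
    and C: "Cf u = 0"
  shows "card (I_H u) = 6"
proof -
  note f = om_facts[OF n3 om]
  have D: "Df u \<noteq> 0" using u27 unfolding Df_def by auto
  have PC: "Pf x ^3 - 1728 * Df x^3 = Cf x^2" for x :: 'a unfolding Pf_def Df_def Cf_def by algebra
  have Cfac: "Cf x = (x^2 - 6*x - 18) * (x^2 - 6*\<omega>*x - 18*\<omega>^2) * (x^2 - 6*\<omega>^2*x - 18*(\<omega>^2)^2)" for x
    unfolding Cf_def using om by algebra
  have "\<exists>z. z \<in> {1, \<omega>, \<omega>^2} \<and> u^2 - 6*z*u - 18*z^2 = 0"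
  proof -
    have "u^2 - 6*u - 18 = 0 \<or> u^2 - 6*\<omega>*u - 18*\<omega>^2 = 0 \<or> u^2 - 6*\<omega>^2*u - 18*(\<omega>^2)^2 = 0"
      using C unfolding Cfac[of u] by simp
    then show ?thesis
    proof (elim disjE)
      assume "u^2 - 6*u - 18 = 0" then show ?thesis by (intro exI[of _ 1]) simp
    qed auto
  qed
  then obtain z where z: "z \<in> {1, \<omega>, \<omega>^2}" and qz: "u^2 - 6*z*u - 18*z^2 = 0" by blast
  have z0: "z \<noteq> 0" using z f by auto
  define s where "s = (u - 3*z)/(3*z)"
  have "s * (3*z) = u - 3*z" unfolding s_def using z0 n3 by simp
  then have "(s^2 - 3) * (9*z^2) = 0" using qz by algebra
  moreover have "9*z^2 \<noteq> 0" using z0 nz_pow3[OF n3, of 2] by simp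
  ultimately have "s^2 - 3 = 0" by (metis mult_eq_0_iff)
  then have s3: "s^2 = 3" by algebra
  define a where "a = 3 + 3*s"
  define b where "b = 3 - 3*s"
  have fac: "Cf x = (x - 1*a) * (x - 1*b) * (x - \<omega>*a) * (x - \<omega>*b) * (x - \<omega>^2*a) * (x - \<omega>^2*b)" for x
    unfolding Cf_def a_def b_def using om s3[THEN eqd] by algebra
  have "I_H u = {v. Cf v = 0}"
  proof -
    have PU: "Pf u^3 = 1728 * Df u^3" using PC[of u] C by (simp add: algebra_simps)
    have "FF u v = - (Df u^3 * Cf v^2)" for v unfolding FF_def using PU PC[of v] by algebra
    then have e: "FF u v = 0 \<longleftrightarrow> Cf v = 0" for v using D by simp
    have "Cf v = 0 \<Longrightarrow> v^3 \<noteq> 27" for v :: 'a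
    proof
      assume a: "Cf v = 0" "v^3 = 27"
      have "Cf v = (v^3)^2 - 540*v^3 - 5832" unfolding Cf_def by algebra
      then have "Cf v = - 19683" using a(2) by simp
      then show False using a(1) nz_pow3[OF n3, of 9] by simp
    qed
    then show ?thesis unfolding omega_I_Z[OF n3 om u27] using e by auto
  qed
  also have "{v. Cf v = 0} = {zz * x | zz x. zz \<in> {1, \<omega>, \<omega>^2} \<and> x \<in> {a, b}}"
  proof -
    have e: "Cf v = 0 \<longleftrightarrow> v = 1*a \<or> v = 1*b \<or> v = \<omega>*a \<or> v = \<omega>*b \<or> v = \<omega>^2*a \<or> v = \<omega>^2*b" for v :: 'a
      unfolding fac by (simp only: mult_eq_0_iff right_minus_eq disj_assoc)
    show ?thesis
    proof
      show "{v. Cf v = 0} \<subseteq> {zz * x | zz x. zz \<in> {1, \<omega>, \<omega>^2} \<and> x \<in> {a, b}}"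
      proof
        fix v :: 'a assume "v \<in> {v. Cf v = 0}"
        then have "v = 1*a \<or> v = 1*b \<or> v = \<omega>*a \<or> v = \<omega>*b \<or> v = \<omega>^2*a \<or> v = \<omega>^2*b" using e by simp
        then show "v \<in> {zz * x | zz x. zz \<in> {1, \<omega>, \<omega>^2} \<and> x \<in> {a, b}}" by blast
      qed
      show "{zz * x | zz x. zz \<in> {1, \<omega>, \<omega>^2} \<and> x \<in> {a, b}} \<subseteq> {v. Cf v = 0}"
        using e by blast
    qed
  qed
  finally have I: "I_H u = {zz * x | zz x. zz \<in> {1, \<omega>, \<omega>^2} \<and> x \<in> {a, b}}" .
  have s0: "s \<noteq> 0" using s3 n3 by auto
  have a0: "a \<noteq> 0"
  proof
    assume "a = 0"
    then have "s = -1" unfolding a_def using n3 by algebra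
    then have "(3::'a) = 1" using s3 by simp
    then have "(3::'a) - 1 = 0" by simp
    then show False using n2 by simp
  qed
  have b0: "b \<noteq> 0"
  proof
    assume "b = 0"
    then have "s = 1" unfolding b_def using n3 by algebra
    then have "(3::'a) = 1" using s3 by simp
    then have "(3::'a) - 1 = 0" by simp
    then show False using n2 by simp
  qed
  have ab: "a^3 \<noteq> b^3"
  proof
    assume h: "a^3 = b^3"
    have "a^3 - b^3 = 54 * s * (3 + s^2)" unfolding a_def b_def by algebra
    then have "324 * s = 0" using h s3 by simp
    moreover have "(324::'a) \<noteq> 0" using nz23[OF n2 n3, of 2 4] by simp
    ultimately show False using s0 by simp
  qed
  have nzX: "\<And>x. x \<in> {a,b} \<Longrightarrow> x \<noteq> 0" using a0 b0 by auto
  have ciX: "\<And>x y. x \<in> {a,b} \<Longrightarrow> y \<in> {a,b} \<Longrightarrow> x^3 = y^3 \<Longrightarrow> x = y" using ab by auto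
  have ce: "card {zz * x | zz x. zz \<in> {1, \<omega>, \<omega>^2} \<and> x \<in> {a,b}} = 3 * card {a,b}"
    by (rule card_orb[OF n3 om _ nzX ciX]) simp
  have "a \<noteq> b" using ab by auto
  then have "card {a,b} = 2" by simp
  then show ?thesis using ce I by simp
qed

theorem mainTheorem11:
  fixes u :: "'a::{finite, field}"
  assumes "u ^ 3 \<noteq> 27"
  shows "(card (UNIV :: 'a set) mod 3 \<in> {0, 2} \<longrightarrow> card (I_H u) = 1)
       \<and> (card (UNIV :: 'a set) mod 3 = 1 \<and> CHAR('a) \<noteq> 2 \<and> A_coef u = 0 \<longrightarrow> card (I_H u) = 4)
       \<and> (card (UNIV :: 'a set) mod 3 = 1 \<and> CHAR('a) \<noteq> 2 \<and> B_coef u = 0 \<longrightarrow> card (I_H u) = 6)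
       \<and> (card (UNIV :: 'a set) mod 3 = 1 \<and> A_coef u * B_coef u \<noteq> 0 \<longrightarrow> card (I_H u) = 12)"
proof (cases "(3::'a) = 0")
  case True
  have q: "card (UNIV :: 'a set) mod 3 = 0" by (rule q_char3[OF True])
  have "I_H u = {u}" by (rule char3_I[OF True assms])
  then show ?thesis using q by simp
next
  case n3: False
  show ?thesis
  proof (cases "\<exists>\<omega>::'a. \<omega>^2 + \<omega> + 1 = 0")
    case False
    then have no: "\<And>x::'a. x^2 + x + 1 \<noteq> 0" by blast
    have q: "card (UNIV :: 'a set) mod 3 = 2" by (rule q_noomega[OF n3 no])
    have "I_H u = {u}" by (rule noomega_I[OF n3 no assms])
    then show ?thesis using q by simp
  next
    case True
    then obtain \<omega> :: 'a where om: "\<omega>^2 + \<omega> + 1 = 0" by blast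
    have q: "card (UNIV :: 'a set) mod 3 = 1" by (rule q_omega[OF n3 om])
    have n27: "(27::'a) \<noteq> 0" using nz_pow3[OF n3, of 3] by simp
    have A: "A_coef u = 0 \<longleftrightarrow> Pf u = 0"
    proof -
      have "A_coef u = - Pf u / 3" unfolding A_coef_def Pf_def by simp
      then show ?thesis using n3 by simp
    qed
    have B: "B_coef u = 0 \<longleftrightarrow> Cf u = 0"
    proof -
      have "B_coef u = Cf u / 27" unfolding B_coef_def Cf_def by simp
      then show ?thesis using n27 by (metis divide_eq_0_iff)
    qed
    have c1: "card (UNIV :: 'a set) mod 3 = 1 \<and> CHAR('a) \<noteq> 2 \<and> A_coef u = 0 \<longrightarrow> card (I_H u) = 4"
    proof
      assume h: "card (UNIV :: 'a set) mod 3 = 1 \<and> CHAR('a) \<noteq> 2 \<and> A_coef u = 0"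
      then have n2: "(2::'a) \<noteq> 0" using char2_iff[where 'a='a] by simp
      show "card (I_H u) = 4" using card4[OF n3 n2 om assms] h A by simp
    qed
    have c2: "card (UNIV :: 'a set) mod 3 = 1 \<and> CHAR('a) \<noteq> 2 \<and> B_coef u = 0 \<longrightarrow> card (I_H u) = 6"
    proof
      assume h: "card (UNIV :: 'a set) mod 3 = 1 \<and> CHAR('a) \<noteq> 2 \<and> B_coef u = 0"
      then have n2: "(2::'a) \<noteq> 0" using char2_iff[where 'a='a] by simp
      show "card (I_H u) = 6" using card6[OF n3 n2 om assms] h B by simp
    qed
    have c3: "card (UNIV :: 'a set) mod 3 = 1 \<and> A_coef u * B_coef u \<noteq> 0 \<longrightarrow> card (I_H u) = 12"
    proof
      assume h: "card (UNIV :: 'a set) mod 3 = 1 \<and> A_coef u * B_coef u \<noteq> 0"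
      then have "Pf u \<noteq> 0" "Cf u \<noteq> 0" using A B by auto
      then show "card (I_H u) = 12" using card12[OF n3 om assms] by simp
    qed
    show ?thesis using q c1 c2 c3 by simp
  qed
qed

end
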